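(* For any integer $m\ge1$ there exist $\varepsilon>0$ small enough and $b\in\mathbb{R}$ such that, on $I(m,\varepsilon)$, $N(f_2+bf_3)=1$, where $f_2,f_3$ are the second and third eigenfunctions of the Laplacian.
   Context: $I(m,\varepsilon)$ is the metric graph with vertices $v_1,v_2,v_3,v_4$, an edge $e_1$ of length $1/2$ from $v_1$ to $v_2$, an edge $e_2$ of length $1/2$ from $v_3$ to $v_4$, and $m$ parallel edges of length $\varepsilon$ joining $v_2$ and $v_3$. The Laplacian $-\frac{d^2}{dx^2}$ acts edgewise with Dirichlet conditions at $v_1,v_4$ and Neumann–Kirchhoff conditions (continuity and vanishing sum of outgoing derivatives) at $v_2,v_3$; eigenvalues are ordered increasingly with multiplicity, with $L^2$-orthogonal eigenfunctions $f_1,f_2,\dots$. $N(f)$ is the number of zeroes of $f$ other than at $v_1,v_4$. *)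

theory Defs
  imports "HOL-Analysis.Analysis"
begin

text \<open>Edges are indexed by natural numbers:
  edge 0 = e1, parametrised by [0,1/2], from v1 (x=0) to v2 (x=1/2);
  edge 1 = e2, parametrised by [0,1/2], from v3 (x=0) to v4 (x=1/2);
  edges 2..m+1 = the m parallel edges, parametrised by [0,eps], from v2 (x=0) to v3 (x=eps).
  A function on the graph is f :: nat => real => real, f j x being its value at
  parameter x on edge j; it is required to vanish off the graph.\<close>

definition edge_len :: "real \<Rightarrow> nat \<Rightarrow> real" where
  "edge_len eps j = (if j < 2 then 1/2 else eps)"

definition is_edge :: "nat \<Rightarrow> nat \<Rightarrow> bool" where
  "is_edge m j \<longleftrightarrow> j < m + 2"

text \<open>Eigenfunction of -d^2/dx^2 with eigenvalue lam (possibly zero function):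
  edgewise C^2 solution of -f'' = lam f, Dirichlet at v1, v4, continuity and
  Kirchhoff (sum of outgoing derivatives = 0) at v2, v3.\<close>
definition eigen_fun :: "nat \<Rightarrow> real \<Rightarrow> real \<Rightarrow> (nat \<Rightarrow> real \<Rightarrow> real) \<Rightarrow> bool" where
  "eigen_fun m eps lam f \<longleftrightarrow>
     (\<forall>j x. \<not> (is_edge m j \<and> x \<in> {0..edge_len eps j}) \<longrightarrow> f j x = 0) \<and>
     (\<exists>g :: nat \<Rightarrow> real \<Rightarrow> real.
        (\<forall>j. is_edge m j \<longrightarrow> (\<forall>x\<in>{0..edge_len eps j}.
            (f j has_real_derivative g j x) (at x within {0..edge_len eps j}) \<and>
            (g j has_real_derivative (- lam * f j x)) (at x within {0..edge_len eps j}))) \<and>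
        \<comment> \<open>Dirichlet at v1 and v4\<close>
        f 0 0 = 0 \<and> f 1 (1/2) = 0 \<and>
        \<comment> \<open>continuity at v2 and v3\<close>
        (\<forall>j. 2 \<le> j \<and> j < m + 2 \<longrightarrow> f j 0 = f 0 (1/2) \<and> f j eps = f 1 0) \<and>
        \<comment> \<open>Kirchhoff at v2 and v3 (outgoing derivatives)\<close>
        - g 0 (1/2) + (\<Sum>j=2..<m+2. g j 0) = 0 \<and>
        g 1 0 + (\<Sum>j=2..<m+2. - g j eps) = 0)"

definition multiplicity :: "nat \<Rightarrow> real \<Rightarrow> real \<Rightarrow> nat" where
  "multiplicity m eps lam = Sup {k. \<exists>g :: nat \<Rightarrow> nat \<Rightarrow> real \<Rightarrow> real.
      (\<forall>i<k. eigen_fun m eps lam (g i)) \<and>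
      (\<forall>c :: nat \<Rightarrow> real. (\<forall>j x. (\<Sum>i<k. c i * g i j x) = 0) \<longrightarrow> (\<forall>i<k. c i = 0))}"

definition eig_count :: "nat \<Rightarrow> real \<Rightarrow> real \<Rightarrow> nat" where
  "eig_count m eps lam = (\<Sum>mu\<in>{mu. mu \<le> lam \<and> 0 < multiplicity m eps mu}. multiplicity m eps mu)"

text \<open>k-th eigenvalue (k >= 1), ordered increasingly with multiplicity.\<close>
definition eigenvalue :: "nat \<Rightarrow> real \<Rightarrow> nat \<Rightarrow> real" where
  "eigenvalue m eps k = Inf {lam. k \<le> eig_count m eps lam}"

definition L2_inner :: "nat \<Rightarrow> real \<Rightarrow> (nat \<Rightarrow> real \<Rightarrow> real) \<Rightarrow> (nat \<Rightarrow> real \<Rightarrow> real) \<Rightarrow> real" where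
  "L2_inner m eps f g = (\<Sum>j<m+2. integral {0..edge_len eps j} (\<lambda>x. f j x * g j x))"

definition first_three_eigenfunctions :: "nat \<Rightarrow> real \<Rightarrow> (nat \<Rightarrow> real \<Rightarrow> real) \<Rightarrow>
    (nat \<Rightarrow> real \<Rightarrow> real) \<Rightarrow> (nat \<Rightarrow> real \<Rightarrow> real) \<Rightarrow> bool" where
  "first_three_eigenfunctions m eps f1 f2 f3 \<longleftrightarrow>
     eigen_fun m eps (eigenvalue m eps 1) f1 \<and> f1 \<noteq> (\<lambda>j x. 0) \<and>
     eigen_fun m eps (eigenvalue m eps 2) f2 \<and> f2 \<noteq> (\<lambda>j x. 0) \<and>
     eigen_fun m eps (eigenvalue m eps 3) f3 \<and> f3 \<noteq> (\<lambda>j x. 0) \<and>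
     L2_inner m eps f1 f2 = 0 \<and> L2_inner m eps f1 f3 = 0 \<and> L2_inner m eps f2 f3 = 0"

text \<open>Points of the graph other than v1, v4: the vertices v2, v3 and interior
  points of edges.\<close>
datatype gpoint = V2 | V3 | EdgePt nat real

definition zero_points :: "nat \<Rightarrow> real \<Rightarrow> (nat \<Rightarrow> real \<Rightarrow> real) \<Rightarrow> gpoint set" where
  "zero_points m eps f =
     {p. p = V2 \<and> f 0 (1/2) = 0} \<union> {p. p = V3 \<and> f 1 0 = 0} \<union>
     {EdgePt j x | j x. is_edge m j \<and> 0 < x \<and> x < edge_len eps j \<and> f j x = 0}"

text \<open>N(f): number of zeros other than at v1, v4 (card of an infinite set is 0,
  so N f = 1 means exactly one zero).\<close>
definition num_zeros :: "nat \<Rightarrow> real \<Rightarrow> (nat \<Rightarrow> real \<Rightarrow> real) \<Rightarrow> nat" where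
  "num_zeros m eps f = card (zero_points m eps f)"

end

theory Submission
  imports Defs
begin

lemma deriv_mono:
  fixes f d :: "real \<Rightarrow> real"
  assumes der: "\<And>x. x \<in> {a..b} \<Longrightarrow> (f has_real_derivative d x) (at x within {a..b})"
    and nn: "\<And>x. x \<in> {a..b} \<Longrightarrow> d x \<ge> 0" and "a \<le> x" "x \<le> y" "y \<le> b"
  shows "f x \<le> f y"
proof -
  have "\<And>z. x \<le> z \<Longrightarrow> z \<le> y \<Longrightarrow> (f has_derivative (*) (d z)) (at z within {x..y})"
  proof -
    fix z assume "x \<le> z" "z \<le> y"
    then have "(f has_real_derivative d z) (at z within {a..b})" using der assms(3-5) by auto
    then have "(f has_real_derivative d z) (at z within {x..y})"
      by (rule DERIV_subset) (use assms(3-5) in auto)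
    then show "(f has_derivative (*) (d z)) (at z within {x..y})"
      unfolding has_field_derivative_def by simp
  qed
  from mvt_very_simple[OF \<open>x \<le> y\<close> this] obtain z where z: "z \<in> {x..y}" "f y - f x = d z * (y - x)"
    by blast
  have "d z \<ge> 0" using nn z assms(3-5) by auto
  moreover have "y - x \<ge> 0" using \<open>x \<le> y\<close> by simp
  ultimately have "d z * (y - x) \<ge> 0" by simp
  then show ?thesis using z by simp
qed

lemma deriv_zero_const:
  fixes f :: "real \<Rightarrow> real"
  assumes der: "\<And>x. x \<in> {a..b} \<Longrightarrow> (f has_real_derivative 0) (at x within {a..b})"
    and "x \<in> {a..b}"
  shows "f x = f a"
proof -
  have "f a \<le> f x" using deriv_mono[of a b f "\<lambda>_. 0" a x] der assms(2) by auto
  moreover have "- f a \<le> - f x"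
    using deriv_mono[of a b "\<lambda>x. - f x" "\<lambda>_. 0" a x] der assms(2) DERIV_minus[OF der]
    by auto
  ultimately show ?thesis by simp
qed

lemma ode_unique:
  fixes f g :: "real \<Rightarrow> real"
  assumes k: "k > 0" and lam: "lam = k^2"
    and der: "\<And>x. x \<in> {0..L} \<Longrightarrow> (f has_real_derivative g x) (at x within {0..L}) \<and>
            (g has_real_derivative (- lam * f x)) (at x within {0..L})"
    and x: "x \<in> {0..L}"
  shows "f x = f 0 * cos (k*x) + g 0 / k * sin (k*x)"
proof -
  define h where "h x = f x - (f 0 * cos (k*x) + g 0 / k * sin (k*x))" for x
  define h' where "h' x = g x - (- f 0 * k * sin (k*x) + g 0 * cos (k*x))" for x
  define E where "E x = k^2 * (h x)^2 + (h' x)^2" for x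
  have dh: "(h has_real_derivative h' y) (at y within {0..L})" if "y \<in> {0..L}" for y
    unfolding h_def h'_def using der[OF that] k
    by (auto intro!: derivative_eq_intros simp: field_simps)
  have dh': "(h' has_real_derivative (- (k^2) * h y)) (at y within {0..L})" if "y \<in> {0..L}" for y
    unfolding h_def h'_def using der[OF that] k lam
    by (auto intro!: derivative_eq_intros simp: field_simps power2_eq_square)
  have dE: "(E has_real_derivative 0) (at y within {0..L})" if "y \<in> {0..L}" for y
    unfolding E_def using dh[OF that] dh'[OF that]
    by (auto intro!: derivative_eq_intros simp: field_simps power2_eq_square)
  have "E x = E 0" using deriv_zero_const[OF dE x] by simp
  also have "E 0 = 0" unfolding E_def h_def h'_def by simp
  finally have e0: "k^2 * (h x)^2 + (h' x)^2 = 0" unfolding E_def .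
  have "k^2 * (h x)^2 \<ge> 0" by simp
  then have "k^2 * (h x)^2 = 0" using e0 by (smt (verit) zero_le_power2)
  then have "h x = 0" using k by simp
  then show ?thesis unfolding h_def by simp
qed

lemma ode_unique_d:
  fixes f g :: "real \<Rightarrow> real"
  assumes k: "k > 0" and lam: "lam = k^2"
    and der: "\<And>x. x \<in> {0..L} \<Longrightarrow> (f has_real_derivative g x) (at x within {0..L}) \<and>
            (g has_real_derivative (- lam * f x)) (at x within {0..L})"
    and x: "x \<in> {0..L}"
  shows "g x = - f 0 * k * sin (k*x) + g 0 * cos (k*x)"
proof -
  define h where "h x = f x - (f 0 * cos (k*x) + g 0 / k * sin (k*x))" for x
  define h' where "h' x = g x - (- f 0 * k * sin (k*x) + g 0 * cos (k*x))" for x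
  define E where "E x = k^2 * (h x)^2 + (h' x)^2" for x
  have dh: "(h has_real_derivative h' y) (at y within {0..L})" if "y \<in> {0..L}" for y
    unfolding h_def h'_def using der[OF that] k
    by (auto intro!: derivative_eq_intros simp: field_simps)
  have dh': "(h' has_real_derivative (- (k^2) * h y)) (at y within {0..L})" if "y \<in> {0..L}" for y
    unfolding h_def h'_def using der[OF that] k lam
    by (auto intro!: derivative_eq_intros simp: field_simps power2_eq_square)
  have dE: "(E has_real_derivative 0) (at y within {0..L})" if "y \<in> {0..L}" for y
    unfolding E_def using dh[OF that] dh'[OF that]
    by (auto intro!: derivative_eq_intros simp: field_simps power2_eq_square)
  have "E x = E 0" using deriv_zero_const[OF dE x] by simp
  also have "E 0 = 0" unfolding E_def h_def h'_def by simp
  finally have e0: "k^2 * (h x)^2 + (h' x)^2 = 0" unfolding E_def .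
  have "k^2 * (h x)^2 \<ge> 0" by simp
  then have "(h' x)^2 = 0" using e0 by (smt (verit) zero_le_power2)
  then have "h' x = 0" by simp
  then show ?thesis unfolding h'_def by simp
qed

lemma fg_mono:
  fixes f g :: "real \<Rightarrow> real"
  assumes lam: "lam \<le> 0"
    and der: "\<And>x. x \<in> {0..L} \<Longrightarrow> (f has_real_derivative g x) (at x within {0..L}) \<and>
            (g has_real_derivative (- lam * f x)) (at x within {0..L})"
    and "0 \<le> x" "x \<le> y" "y \<le> L"
  shows "f x * g x \<le> f y * g y"
proof (rule deriv_mono[of 0 L "\<lambda>x. f x * g x" "\<lambda>x. g x * g x + f x * (- lam * f x)"])
  fix z assume z: "z \<in> {0..L}"
  show "((\<lambda>x. f x * g x) has_real_derivative g z * g z + f z * (- lam * f z)) (at z within {0..L})"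
    using der[OF z] by (auto intro!: derivative_eq_intros)
  have "f z * (- lam * f z) = (-lam) * (f z * f z)" by simp
  also have "\<dots> \<ge> 0" using lam by (simp add: mult_nonpos_nonneg)
  finally show "g z * g z + f z * (- lam * f z) \<ge> 0" by (smt (verit) zero_le_square)
qed (use assms in auto)

lemma fg_zero:
  fixes f g :: "real \<Rightarrow> real"
  assumes lam: "lam \<le> 0"
    and der: "\<And>x. x \<in> {0..L} \<Longrightarrow> (f has_real_derivative g x) (at x within {0..L}) \<and>
            (g has_real_derivative (- lam * f x)) (at x within {0..L})"
    and L: "0 \<le> L" and e0: "f 0 * g 0 = 0" and eL: "f L * g L = 0"
    and x: "x \<in> {0..L}"
  shows "(f x)^2 = (f 0)^2" "(f L)^2 = (f 0)^2"
proof -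
  have fg0: "f y * g y = 0" if "y \<in> {0..L}" for y
    using fg_mono[OF lam der, of 0 y] fg_mono[OF lam der, of y L] that e0 eL by auto
  have d: "((\<lambda>x. (f x)^2) has_real_derivative 0) (at y within {0..L})" if "y \<in> {0..L}" for y
  proof -
    have "((\<lambda>x. (f x)^2) has_real_derivative 2 * (f y * g y)) (at y within {0..L})"
      using der[OF that] by (auto intro!: derivative_eq_intros)
    then show ?thesis using fg0[OF that] by simp
  qed
  show "(f x)^2 = (f 0)^2" using deriv_zero_const[OF d x] by simp
  show "(f L)^2 = (f 0)^2" using deriv_zero_const[OF d, of L] L by simp
qed

lemma edge_facts:
  "edge_len eps 0 = 1/2" "edge_len eps 1 = 1/2" "j \<ge> 2 \<Longrightarrow> edge_len eps j = eps"
  "is_edge m j \<longleftrightarrow> j < m + 2"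
  by (auto simp: edge_len_def is_edge_def)

lemma nonpos_zero:
  assumes ef: "eigen_fun m eps lam f" and lam: "lam \<le> 0" and eps: "eps > 0"
  shows "f = (\<lambda>j x. 0)"
proof -
  obtain g where
    off: "\<forall>j x. \<not> (is_edge m j \<and> x \<in> {0..edge_len eps j}) \<longrightarrow> f j x = 0" and
    der: "\<forall>j. is_edge m j \<longrightarrow> (\<forall>x\<in>{0..edge_len eps j}.
            (f j has_real_derivative g j x) (at x within {0..edge_len eps j}) \<and>
            (g j has_real_derivative (- lam * f j x)) (at x within {0..edge_len eps j}))" and
    d1: "f 0 0 = 0" and d2: "f 1 (1/2) = 0" and
    cont: "\<forall>j. 2 \<le> j \<and> j < m + 2 \<longrightarrow> f j 0 = f 0 (1/2) \<and> f j eps = f 1 0" and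
    k1: "- g 0 (1/2) + (\<Sum>j=2..<m+2. g j 0) = 0" and
    k2: "g 1 0 + (\<Sum>j=2..<m+2. - g j eps) = 0"
    using ef unfolding eigen_fun_def by blast
  have der0: "\<And>x. x \<in> {0..1/2} \<Longrightarrow> (f 0 has_real_derivative g 0 x) (at x within {0..1/2}) \<and>
            (g 0 has_real_derivative (- lam * f 0 x)) (at x within {0..1/2})"
    using der[rule_format, of 0] by (auto simp: edge_facts)
  have der1: "\<And>x. x \<in> {0..1/2} \<Longrightarrow> (f 1 has_real_derivative g 1 x) (at x within {0..1/2}) \<and>
            (g 1 has_real_derivative (- lam * f 1 x)) (at x within {0..1/2})"
    using der[rule_format, of 1] by (auto simp: edge_len_def is_edge_def)
  have derj: "\<And>x. x \<in> {0..eps} \<Longrightarrow> (f j has_real_derivative g j x) (at x within {0..eps}) \<and>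
            (g j has_real_derivative (- lam * f j x)) (at x within {0..eps})"
    if "j \<in> {2..<m+2}" for j
    using der[rule_format, of j] that by (auto simp: edge_facts)
  have a1: "f 0 0 * g 0 0 \<le> f 0 (1/2) * g 0 (1/2)"
    using fg_mono[OF lam der0, of 0 "1/2"] by simp
  have a2: "f 0 (1/2) * g 0 (1/2) = (\<Sum>j=2..<m+2. f j 0 * g j 0)"
  proof -
    have "g 0 (1/2) = (\<Sum>j=2..<m+2. g j 0)" using k1 by linarith
    then have "f 0 (1/2) * g 0 (1/2) = (\<Sum>j=2..<m+2. f 0 (1/2) * g j 0)"
      by (simp only: sum_distrib_left)
    also have "\<dots> = (\<Sum>j=2..<m+2. f j 0 * g j 0)"
      using cont by (intro sum.cong) auto
    finally show ?thesis .
  qed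
  have a3: "(\<Sum>j=2..<m+2. f j 0 * g j 0) \<le> (\<Sum>j=2..<m+2. f j eps * g j eps)"
    by (intro sum_mono fg_mono[OF lam derj]) (use eps in auto)
  have a4: "(\<Sum>j=2..<m+2. f j eps * g j eps) = f 1 0 * g 1 0"
  proof -
    have "(\<Sum>j=2..<m+2. f j eps * g j eps) = (\<Sum>j=2..<m+2. f 1 0 * g j eps)"
      using cont by (intro sum.cong) auto
    also have "\<dots> = f 1 0 * g 1 0"
    proof -
      have "g 1 0 = (\<Sum>j=2..<m+2. g j eps)" using k2 using sum_negf[of "\<lambda>j. g j eps" "{2..<m+2}"] by linarith
      then show ?thesis by (simp only: sum_distrib_left)
    qed
    finally show ?thesis .
  qed
  have a5: "f 1 0 * g 1 0 \<le> f 1 (1/2) * g 1 (1/2)"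
    using fg_mono[OF lam der1, of 0 "1/2"] by simp
  have z0: "f 0 (1/2) * g 0 (1/2) = 0" and z1: "f 1 0 * g 1 0 = 0"
  proof -
    have "0 \<le> f 0 (1/2) * g 0 (1/2)" using a1 d1 by simp
    moreover have "f 1 0 * g 1 0 \<le> 0" using a5 d2 by simp
    ultimately show "f 0 (1/2) * g 0 (1/2) = 0" "f 1 0 * g 1 0 = 0"
      using a2 a3 a4 by linarith+
  qed
  have F0: "f 0 x = 0" if "x \<in> {0..1/2}" for x
    using fg_zero(1)[OF lam der0 _ _ z0 that] d1 by simp
  have F1: "f 1 x = 0" if "x \<in> {0..1/2}" for x
  proof -
    have e: "f 1 (1/2) * g 1 (1/2) = 0" using d2 by simp
    have "(f 1 (1/2))^2 = (f 1 0)^2" using fg_zero(2)[OF lam der1 _ z1 e that] by simp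
    then have "f 1 0 = 0" using d2 by simp
    then show ?thesis using fg_zero(1)[OF lam der1 _ z1 e that] by simp
  qed
  have Fj: "f j x = 0" if "j \<in> {2..<m+2}" "x \<in> {0..eps}" for j x
  proof -
    have "f j 0 = 0" using cont that F0[of "1/2"] by auto
    moreover have "f j eps = 0" using cont that F1[of 0] by auto
    ultimately show ?thesis using fg_zero(1)[OF lam derj[OF that(1)] _ _ _ that(2)] eps by simp
  qed
  show ?thesis
  proof (intro ext)
    fix j x
    show "f j x = 0"
    proof (cases "is_edge m j \<and> x \<in> {0..edge_len eps j}")
      case True
      then show ?thesis using F0 F1 Fj
        by (cases "j = 0"; cases "j = 1") (auto simp: edge_len_def is_edge_def)
    next
      case False
      then show ?thesis using off by blast
    qed
  qed
qed

definition cA :: "nat \<Rightarrow> real \<Rightarrow> real \<Rightarrow> real" where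
  "cA m eps k = sin (k/2) * cos (k*eps) + cos (k/2) * sin (k*eps) / real m"
definition cB :: "nat \<Rightarrow> real \<Rightarrow> real \<Rightarrow> real" where
  "cB m eps k = cos (k/2) * cos (k*eps) - real m * sin (k/2) * sin (k*eps)"
definition cD :: "nat \<Rightarrow> real \<Rightarrow> real \<Rightarrow> real" where
  "cD m eps k = cos (k/2) * cA m eps k + sin (k/2) * cB m eps k"

definition wr :: "nat \<Rightarrow> real \<Rightarrow> real \<Rightarrow> nat \<Rightarrow> real \<Rightarrow> real" where
  "wr m eps k j x = (if j = 0 then sin (k*x)
     else if j = 1 then cA m eps k * cos (k*x) + cB m eps k * sin (k*x)
     else sin (k/2) * cos (k*x) + cos (k/2) / real m * sin (k*x))"
definition wd :: "nat \<Rightarrow> real \<Rightarrow> real \<Rightarrow> nat \<Rightarrow> real \<Rightarrow> real" where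
  "wd m eps k j x = (if j = 0 then k * cos (k*x)
     else if j = 1 then k * (- cA m eps k * sin (k*x) + cB m eps k * cos (k*x))
     else k * (- sin (k/2) * sin (k*x) + cos (k/2) / real m * cos (k*x)))"
definition wf :: "nat \<Rightarrow> real \<Rightarrow> real \<Rightarrow> nat \<Rightarrow> real \<Rightarrow> real" where
  "wf m eps k j x = (if is_edge m j \<and> x \<in> {0..edge_len eps j} then wr m eps k j x else 0)"

lemma wr_deriv: "m \<ge> 1 \<Longrightarrow> (wr m eps k j has_real_derivative wd m eps k j x) (at x within S)"
  unfolding wr_def wd_def
  by (auto intro!: derivative_eq_intros simp: algebra_simps)

lemma wd_deriv: "m \<ge> 1 \<Longrightarrow> (wd m eps k j has_real_derivative (- (k^2) * wr m eps k j x)) (at x within S)"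
  unfolding wr_def wd_def
  by (auto intro!: derivative_eq_intros simp: algebra_simps power2_eq_square)

lemma sum_const_par: "(\<Sum>j=2..<m+2. (c::real)) = real m * c"
  by simp

lemma w_eigen:
  assumes m: "m \<ge> 1" and D: "cD m eps k = 0" and eps: "eps \<ge> 0"
  shows "eigen_fun m eps (k^2) (wf m eps k)"
  unfolding eigen_fun_def
proof (intro conjI exI[of _ "wd m eps k"])
  show "\<forall>j x. \<not> (is_edge m j \<and> x \<in> {0..edge_len eps j}) \<longrightarrow> wf m eps k j x = 0"
    by (simp add: wf_def)
  show "\<forall>j. is_edge m j \<longrightarrow> (\<forall>x\<in>{0..edge_len eps j}.
            (wf m eps k j has_real_derivative wd m eps k j x) (at x within {0..edge_len eps j}) \<and>
            (wd m eps k j has_real_derivative (- (k^2) * wf m eps k j x)) (at x within {0..edge_len eps j}))"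
  proof (intro allI impI ballI conjI)
    fix j x assume j: "is_edge m j" and x: "x \<in> {0..edge_len eps j}"
    show "(wf m eps k j has_real_derivative wd m eps k j x) (at x within {0..edge_len eps j})"
      by (rule has_field_derivative_transform_within[OF wr_deriv[OF m] zero_less_one x]) (use j in \<open>simp add: wf_def\<close>)
    show "(wd m eps k j has_real_derivative (- (k^2) * wf m eps k j x)) (at x within {0..edge_len eps j})"
      using wd_deriv[OF m, of eps k j x] j x by (simp add: wf_def)
  qed
  show "wf m eps k 0 0 = 0" by (simp add: wf_def wr_def is_edge_def edge_len_def)
  show "wf m eps k 1 (1/2) = 0" using D
    by (simp add: wf_def wr_def is_edge_def edge_len_def cD_def algebra_simps)
  show "\<forall>j. 2 \<le> j \<and> j < m + 2 \<longrightarrow> wf m eps k j 0 = wf m eps k 0 (1/2) \<and> wf m eps k j eps = wf m eps k 1 0"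
    using eps by (auto simp: wf_def wr_def is_edge_def edge_len_def cA_def)
  show "- wd m eps k 0 (1/2) + (\<Sum>j=2..<m+2. wd m eps k j 0) = 0"
  proof -
    have "(\<Sum>j=2..<m+2. wd m eps k j 0) = (\<Sum>j=2..<m+2. k * (cos (k/2) / real m))"
      by (intro sum.cong) (auto simp: wd_def)
    also have "\<dots> = k * cos (k/2)" using m by simp
    finally show ?thesis by (simp add: wd_def)
  qed
  show "wd m eps k 1 0 + (\<Sum>j=2..<m+2. - wd m eps k j eps) = 0"
  proof -
    have "(\<Sum>j=2..<m+2. - wd m eps k j eps) =
       (\<Sum>j=2..<m+2. - (k * (- sin (k/2) * sin (k*eps) + cos (k/2) / real m * cos (k*eps))))"
      by (intro sum.cong) (auto simp: wd_def)
    also have "\<dots> = real m * (- (k * (- sin (k/2) * sin (k*eps) + cos (k/2) / real m * cos (k*eps))))"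
      by simp
    also have "\<dots> = - k * cB m eps k" using m unfolding cB_def by (simp add: field_simps)
    finally have "(\<Sum>j=2..<m+2. - wd m eps k j eps) = - k * cB m eps k" .
    moreover have "wd m eps k 1 0 = k * cB m eps k" by (simp add: wd_def)
    ultimately show ?thesis by linarith
  qed
qed

lemma classify:
  assumes m: "m \<ge> 1" and eps: "eps > 0" and k: "k > 0" and sn: "sin (k*eps) \<noteq> 0"
    and ef: "eigen_fun m eps (k^2) f"
  shows "\<exists>c. f = (\<lambda>j x. c * wf m eps k j x) \<and> (c \<noteq> 0 \<longrightarrow> cD m eps k = 0)"
proof -
  obtain g where
    off: "\<forall>j x. \<not> (is_edge m j \<and> x \<in> {0..edge_len eps j}) \<longrightarrow> f j x = 0" and
    der: "\<forall>j. is_edge m j \<longrightarrow> (\<forall>x\<in>{0..edge_len eps j}.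
            (f j has_real_derivative g j x) (at x within {0..edge_len eps j}) \<and>
            (g j has_real_derivative (- (k^2) * f j x)) (at x within {0..edge_len eps j}))" and
    d1: "f 0 0 = 0" and d2: "f 1 (1/2) = 0" and
    cont: "\<forall>j. 2 \<le> j \<and> j < m + 2 \<longrightarrow> f j 0 = f 0 (1/2) \<and> f j eps = f 1 0" and
    k1: "- g 0 (1/2) + (\<Sum>j=2..<m+2. g j 0) = 0" and
    k2: "g 1 0 + (\<Sum>j=2..<m+2. - g j eps) = 0"
    using ef unfolding eigen_fun_def by blast
  have der0: "\<And>x. x \<in> {0..1/2} \<Longrightarrow> (f 0 has_real_derivative g 0 x) (at x within {0..1/2}) \<and>
            (g 0 has_real_derivative (- (k^2) * f 0 x)) (at x within {0..1/2})"
    using der[rule_format, of 0] by (auto simp: edge_len_def is_edge_def)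
  have der1: "\<And>x. x \<in> {0..1/2} \<Longrightarrow> (f 1 has_real_derivative g 1 x) (at x within {0..1/2}) \<and>
            (g 1 has_real_derivative (- (k^2) * f 1 x)) (at x within {0..1/2})"
    using der[rule_format, of 1] by (auto simp: edge_len_def is_edge_def)
  have derj: "\<And>x. x \<in> {0..eps} \<Longrightarrow> (f j has_real_derivative g j x) (at x within {0..eps}) \<and>
            (g j has_real_derivative (- (k^2) * f j x)) (at x within {0..eps})"
    if "j \<in> {2..<m+2}" for j
    using der[rule_format, of j] that by (auto simp: edge_len_def is_edge_def)
  define c where "c = g 0 0 / k"
  have f0: "f 0 x = c * sin (k*x)" if "x \<in> {0..1/2}" for x
    using ode_unique[OF k refl der0 that] d1 by (simp add: c_def)
  have g0h: "g 0 (1/2) = c * k * cos (k/2)"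
    using ode_unique_d[OF k refl der0, of "1/2"] d1 k by (simp add: c_def)
  define P where "P = c * sin (k/2)"
  have P: "f 0 (1/2) = P" using f0[of "1/2"] by (simp add: P_def)
  define F3 where "F3 = f 1 0"
  have fj: "f j x = P * cos (k*x) + g j 0 / k * sin (k*x)" if "j \<in> {2..<m+2}" "x \<in> {0..eps}" for j x
    using ode_unique[OF k refl derj[OF that(1)] that(2)] cont that(1) P by auto
  have gj: "g j x = - P * k * sin (k*x) + g j 0 * cos (k*x)" if "j \<in> {2..<m+2}" "x \<in> {0..eps}" for j x
    using ode_unique_d[OF k refl derj[OF that(1)] that(2)] cont that(1) P by auto
  define \<beta> where "\<beta> = (F3 - P * cos (k*eps)) / sin (k*eps)"
  have bj: "g j 0 / k = \<beta>" if "j \<in> {2..<m+2}" for j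
  proof -
    have "F3 = P * cos (k*eps) + g j 0 / k * sin (k*eps)"
      using fj[OF that, of eps] cont that eps by (auto simp: F3_def)
    then show ?thesis using sn by (simp add: \<beta>_def field_simps)
  qed
  have gj0: "g j 0 = k * \<beta>" if "j \<in> {2..<m+2}" for j
    using bj[OF that] k by (simp add: field_simps)
  have "g 0 (1/2) = (\<Sum>j=2..<m+2. g j 0)" using k1 by linarith
  also have "\<dots> = (\<Sum>j=2..<m+2. k * \<beta>)" by (intro sum.cong) (auto simp: gj0)
  also have "\<dots> = real m * (k * \<beta>)" by simp
  finally have "c * k * cos (k/2) = real m * (k * \<beta>)" using g0h by simp
  then have beta: "\<beta> = c * cos (k/2) / real m" using k m by (simp add: field_simps)
  have "\<beta> * sin (k*eps) = F3 - P * cos (k*eps)" using sn unfolding \<beta>_def by simp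
  then have "F3 = P * cos (k*eps) + \<beta> * sin (k*eps)" by linarith
  then have F3: "F3 = c * cA m eps k" by (simp add: beta P_def cA_def algebra_simps)
  have "g 1 0 = (\<Sum>j=2..<m+2. g j eps)" using k2 sum_negf[of "\<lambda>j. g j eps" "{2..<m+2}"] by linarith
  also have "\<dots> = (\<Sum>j=2..<m+2. - P * k * sin (k*eps) + k * \<beta> * cos (k*eps))"
  proof (intro sum.cong refl)
    fix j assume j: "j \<in> {2..<m+2}"
    have "g j eps = - P * k * sin (k*eps) + g j 0 * cos (k*eps)" using gj[OF j, of eps] eps by simp
    then show "g j eps = - P * k * sin (k*eps) + k * \<beta> * cos (k*eps)" using gj0[OF j] by simp
  qed
  also have "\<dots> = real m * (- P * k * sin (k*eps) + k * \<beta> * cos (k*eps))" by simp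
  also have "\<dots> = k * c * cB m eps k" using m by (simp add: beta P_def cB_def field_simps)
  finally have g10: "g 1 0 = k * c * cB m eps k" .
  have f1: "f 1 x = c * (cA m eps k * cos (k*x) + cB m eps k * sin (k*x))" if "x \<in> {0..1/2}" for x
  proof -
    have e: "g 1 0 / k = c * cB m eps k" using g10 k by simp
    have "f 1 x = f 1 0 * cos (k*x) + g 1 0 / k * sin (k*x)" using ode_unique[OF k refl der1 that] .
    also have "\<dots> = c * cA m eps k * cos (k*x) + c * cB m eps k * sin (k*x)"
      unfolding e using F3 unfolding F3_def by simp
    finally show ?thesis by (simp add: distrib_left)
  qed
  have "f 1 (1/2) = c * (cA m eps k * cos (k/2) + cB m eps k * sin (k/2))"
    using f1[of "1/2"] by simp
  also have "\<dots> = c * cD m eps k" unfolding cD_def by (simp add: mult.commute)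
  finally have "c * cD m eps k = 0" using d2 by simp
  then have cd: "c \<noteq> 0 \<longrightarrow> cD m eps k = 0" by auto
  have "f = (\<lambda>j x. c * wf m eps k j x)"
  proof (intro ext)
    fix j x
    show "f j x = c * wf m eps k j x"
    proof (cases "is_edge m j \<and> x \<in> {0..edge_len eps j}")
      case True
      show ?thesis
      proof (cases "j = 0")
        case True
        then show ?thesis using \<open>is_edge m j \<and> x \<in> {0..edge_len eps j}\<close> f0
          by (auto simp: wf_def wr_def edge_len_def)
      next
        case j0: False
        show ?thesis
        proof (cases "j = 1")
          case True
          then show ?thesis using \<open>is_edge m j \<and> x \<in> {0..edge_len eps j}\<close> f1
            by (auto simp: wf_def wr_def edge_len_def)
        next
          case False
          then have jj: "j \<in> {2..<m+2}" using j0 True by (auto simp: is_edge_def)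
          have xx: "x \<in> {0..eps}" using True jj by (simp add: edge_len_def)
          have "f j x = P * cos (k*x) + \<beta> * sin (k*x)" using fj[OF jj xx] bj[OF jj] by simp
          also have "\<dots> = c * wr m eps k j x" using j0 False
            by (simp add: wr_def P_def beta algebra_simps)
          finally show ?thesis using True by (simp add: wf_def)
        qed
      qed
    next
      case False
      then show ?thesis using off by (auto simp: wf_def)
    qed
  qed
  with cd show ?thesis by blast
qed

lemma sum_two:
  fixes k :: nat
  assumes "k \<ge> 2"
  shows "(\<Sum>i<k. (if i = 0 then a else if i = 1 then b else 0) * (X i::real)) = a * X 0 + b * X 1"
  using assms
proof (induction k rule: nat_induct_at_least)
  case base
  then show ?case by (simp add: numeral_2_eq_2)
next
  case (Suc n)
  then show ?case by simp
qed

lemma sum_one: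
  fixes k :: nat
  assumes "k \<ge> 1"
  shows "(\<Sum>i<k. (if i = 0 then a else 0) * (X i::real)) = a * X 0"
  using assms
proof (induction k rule: nat_induct_at_least)
  case base
  then show ?case by simp
next
  case (Suc n)
  then show ?case by simp
qed

lemma mult_zero:
  assumes "\<And>f. eigen_fun m eps lam f \<Longrightarrow> f = (\<lambda>j x. 0)"
  shows "multiplicity m eps lam = 0"
  unfolding multiplicity_def
proof (rule cSup_eq_maximum)
  show "0 \<in> {k. \<exists>g. (\<forall>i<k. eigen_fun m eps lam (g i)) \<and>
      (\<forall>c :: nat \<Rightarrow> real. (\<forall>j x. (\<Sum>i<k. c i * g i j x) = 0) \<longrightarrow> (\<forall>i<k. c i = 0))}"
    by auto
  fix k assume "k \<in> {k. \<exists>g. (\<forall>i<k. eigen_fun m eps lam (g i)) \<and>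
      (\<forall>c :: nat \<Rightarrow> real. (\<forall>j x. (\<Sum>i<k. c i * g i j x) = 0) \<longrightarrow> (\<forall>i<k. c i = 0))}"
  then obtain g where g: "\<forall>i<k. eigen_fun m eps lam (g i)"
    "\<forall>c :: nat \<Rightarrow> real. (\<forall>j x. (\<Sum>i<k. c i * g i j x) = 0) \<longrightarrow> (\<forall>i<k. c i = 0)" by blast
  show "k \<le> 0"
  proof (rule ccontr)
    assume "\<not> k \<le> 0"
    then have k: "k \<ge> 1" by simp
    have g0: "g 0 = (\<lambda>j x. 0)" using assms g(1) k by auto
    have "\<forall>j x. (\<Sum>i<k. (if i = 0 then 1 else 0) * g i j x) = 0"
      using sum_one[OF k, of 1 "\<lambda>i. g i _ _"] g0 by simp
    then have "\<forall>i<k. (if i = 0 then (1::real) else 0) = 0"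
      using spec[OF g(2), of "\<lambda>i. if i = 0 then 1 else 0"] by blast
    then show False using k by auto
  qed
qed

lemma mult_one:
  assumes span: "\<And>f. eigen_fun m eps lam f \<Longrightarrow> \<exists>c. f = (\<lambda>j x. c * w j x)"
    and f0: "eigen_fun m eps lam f0" and nz: "f0 \<noteq> (\<lambda>j x. 0)"
  shows "multiplicity m eps lam = 1"
  unfolding multiplicity_def
proof (rule cSup_eq_maximum)
  obtain j0 x0 where jx: "f0 j0 x0 \<noteq> 0" using nz by blast
  show "1 \<in> {k. \<exists>g. (\<forall>i<k. eigen_fun m eps lam (g i)) \<and>
      (\<forall>c :: nat \<Rightarrow> real. (\<forall>j x. (\<Sum>i<k. c i * g i j x) = 0) \<longrightarrow> (\<forall>i<k. c i = 0))}"
  proof (intro CollectI exI[of _ "\<lambda>_. f0"] conjI allI impI)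
    fix i :: nat assume "i < 1" then show "eigen_fun m eps lam f0" using f0 by simp
  next
    fix c :: "nat \<Rightarrow> real" and i :: nat
    assume h: "\<forall>j x. (\<Sum>i<1. c i * f0 j x) = 0" and i: "i < 1"
    then have "c 0 * f0 j0 x0 = 0" by auto
    then show "c i = 0" using jx i by simp
  qed
  fix k assume "k \<in> {k. \<exists>g. (\<forall>i<k. eigen_fun m eps lam (g i)) \<and>
      (\<forall>c :: nat \<Rightarrow> real. (\<forall>j x. (\<Sum>i<k. c i * g i j x) = 0) \<longrightarrow> (\<forall>i<k. c i = 0))}"
  then obtain g where g: "\<forall>i<k. eigen_fun m eps lam (g i)"
    "\<forall>c :: nat \<Rightarrow> real. (\<forall>j x. (\<Sum>i<k. c i * g i j x) = 0) \<longrightarrow> (\<forall>i<k. c i = 0)" by blast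
  show "k \<le> 1"
  proof (rule ccontr)
    assume "\<not> k \<le> 1"
    then have k: "k \<ge> 2" by simp
    have k01: "(0::nat) < k" "(1::nat) < k" using k by auto
    obtain c0 where c0: "g 0 = (\<lambda>j x. c0 * w j x)" using span g(1) k01(1) by blast
    obtain c1 where c1: "g 1 = (\<lambda>j x. c1 * w j x)" using span g(1) k01(2) by blast
    show False
    proof (cases "c0 = 0")
      case True
      have "\<forall>j x. (\<Sum>i<k. (if i = 0 then 1 else if i = 1 then 0 else 0) * g i j x) = 0"
        using sum_two[OF k, of 1 0 "\<lambda>i. g i _ _"] c0 True by simp
      then have "\<forall>i<k. (if i = 0 then (1::real) else if i = 1 then 0 else 0) = 0"
        using spec[OF g(2), of "\<lambda>i. if i = 0 then 1 else if i = 1 then 0 else 0"] by blast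
      then have "(if (0::nat) = 0 then (1::real) else if (0::nat) = 1 then 0 else 0) = 0"
        using k01(1) by blast
      then show False by simp
    next
      case False
      have "\<forall>j x. (\<Sum>i<k. (if i = 0 then c1 else if i = 1 then - c0 else 0) * g i j x) = 0"
        using sum_two[OF k, of c1 "- c0" "\<lambda>i. g i _ _"] c0 c1 by simp
      then have "\<forall>i<k. (if i = 0 then c1 else if i = 1 then - c0 else 0) = 0"
        using spec[OF g(2), of "\<lambda>i. if i = 0 then c1 else if i = 1 then - c0 else 0"] by blast
      then have "(if (1::nat) = 0 then c1 else if (1::nat) = 1 then - c0 else 0) = 0"
        using k01(2) by blast
      then show False using False by simp
    qed
  qed
qed

lemma eigenvalues3:
  fixes l1 l2 l3 :: real
  assumes o: "l1 < l2" "l2 < l3"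
    and m1: "multiplicity m eps l1 = 1" and m2: "multiplicity m eps l2 = 1"
    and m3: "multiplicity m eps l3 = 1"
    and m0: "\<And>mu. mu \<le> l3 \<Longrightarrow> mu \<noteq> l1 \<Longrightarrow> mu \<noteq> l2 \<Longrightarrow> mu \<noteq> l3 \<Longrightarrow> multiplicity m eps mu = 0"
  shows "eigenvalue m eps 1 = l1 \<and> eigenvalue m eps 2 = l2 \<and> eigenvalue m eps 3 = l3"
proof -
  have setq: "{mu. mu \<le> lam \<and> 0 < multiplicity m eps mu} = {l. l \<in> {l1, l2, l3} \<and> l \<le> lam}"
    if "lam \<le> l3" for lam
  proof (intro set_eqI iffI)
    fix mu assume "mu \<in> {mu. mu \<le> lam \<and> 0 < multiplicity m eps mu}"
    then show "mu \<in> {l. l \<in> {l1, l2, l3} \<and> l \<le> lam}" using m0[of mu] that by fastforce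
  next
    fix mu assume "mu \<in> {l. l \<in> {l1, l2, l3} \<and> l \<le> lam}"
    then show "mu \<in> {mu. mu \<le> lam \<and> 0 < multiplicity m eps mu}" using m1 m2 m3 by auto
  qed
  have ec: "eig_count m eps lam = (\<Sum>mu\<in>{l. l \<in> {l1, l2, l3} \<and> l \<le> lam}. multiplicity m eps mu)"
    if "lam \<le> l3" for lam
    by (simp only: eig_count_def setq[OF that])
  have c0: "eig_count m eps lam = 0" if "lam < l1" for lam
  proof -
    have "{l. l \<in> {l1, l2, l3} \<and> l \<le> lam} = {}" using that o by auto
    note S = this
    have "lam \<le> l3" using that o by simp
    from ec[OF this] show ?thesis unfolding S by simp
  qed
  have c1: "eig_count m eps lam = 1" if "l1 \<le> lam" "lam < l2" for lam
  proof -
    have "{l. l \<in> {l1, l2, l3} \<and> l \<le> lam} = {l1}" using that o by auto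
    note S = this
    have "lam \<le> l3" using that o by simp
    from ec[OF this] show ?thesis unfolding S using m1 by simp
  qed
  have c2: "eig_count m eps lam = 2" if "l2 \<le> lam" "lam < l3" for lam
  proof -
    have "{l. l \<in> {l1, l2, l3} \<and> l \<le> lam} = {l1, l2}" using that o by auto
    note S = this
    have "lam \<le> l3" using that o by simp
    from ec[OF this] show ?thesis unfolding S using m1 m2 o by simp
  qed
  have c3: "eig_count m eps l3 = 3"
  proof -
    have "{l. l \<in> {l1, l2, l3} \<and> l \<le> l3} = {l1, l2, l3}" using o by auto
    note S = this
    from ec[of l3] show ?thesis unfolding S using m1 m2 m3 o by simp
  qed
  have e1: "eigenvalue m eps 1 = l1" unfolding eigenvalue_def
  proof (rule cInf_eq_minimum)
    show "l1 \<in> {lam. 1 \<le> eig_count m eps lam}" using c1[of l1] o by simp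
    fix x assume "x \<in> {lam. 1 \<le> eig_count m eps lam}"
    then show "l1 \<le> x" using c0[of x] by (cases "x < l1") auto
  qed
  have e2: "eigenvalue m eps 2 = l2" unfolding eigenvalue_def
  proof (rule cInf_eq_minimum)
    show "l2 \<in> {lam. 2 \<le> eig_count m eps lam}" using c2[of l2] o by simp
    fix x assume "x \<in> {lam. 2 \<le> eig_count m eps lam}"
    then show "l2 \<le> x" using c0[of x] c1[of x] by (cases "x < l1"; cases "x < l2") auto
  qed
  have e3: "eigenvalue m eps 3 = l3" unfolding eigenvalue_def
  proof (rule cInf_eq_minimum)
    show "l3 \<in> {lam. 3 \<le> eig_count m eps lam}" using c3 by simp
    fix x assume "x \<in> {lam. 3 \<le> eig_count m eps lam}"
    then show "l3 \<le> x" using c0[of x] c1[of x] c2[of x]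
      by (cases "x < l1"; cases "x < l2"; cases "x < l3") auto
  qed
  show ?thesis using e1 e2 e3 by simp
qed

lemma edge_green:
  fixes f g h q :: "real \<Rightarrow> real"
  assumes L: "L \<ge> 0" and lm: "lam \<noteq> mu"
    and df: "\<And>x. x \<in> {0..L} \<Longrightarrow> (f has_real_derivative g x) (at x within {0..L}) \<and>
            (g has_real_derivative (- lam * f x)) (at x within {0..L})"
    and dh: "\<And>x. x \<in> {0..L} \<Longrightarrow> (h has_real_derivative q x) (at x within {0..L}) \<and>
            (q has_real_derivative (- mu * h x)) (at x within {0..L})"
  shows "integral {0..L} (\<lambda>x. f x * h x) =
     ((g L * h L - f L * q L) - (g 0 * h 0 - f 0 * q 0)) / (mu - lam)"
proof -
  define B where "B x = g x * h x - f x * q x" for x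
  have dB: "(B has_vector_derivative ((mu - lam) * (f x * h x))) (at x within {0..L})"
    if "x \<in> {0..L}" for x
  proof -
    have "(B has_real_derivative ((- lam * f x) * h x + g x * q x - (g x * q x + f x * (- mu * h x))))
        (at x within {0..L})"
      unfolding B_def using df[OF that] dh[OF that] by (auto intro!: derivative_eq_intros)
    moreover have "(- lam * f x) * h x + g x * q x - (g x * q x + f x * (- mu * h x)) = (mu - lam) * (f x * h x)"
      by (simp add: algebra_simps)
    ultimately show ?thesis by (simp add: has_real_derivative_iff_has_vector_derivative)
  qed
  have "((\<lambda>x. (mu - lam) * (f x * h x)) has_integral (B L - B 0)) {0..L}"
    using fundamental_theorem_of_calculus[OF L dB] by simp
  from has_integral_mult_right[OF this, of "1 / (mu - lam)"]
  have "((\<lambda>x. f x * h x) has_integral ((B L - B 0) / (mu - lam))) {0..L}"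
    using lm by simp
  then show ?thesis unfolding B_def by (rule integral_unique)
qed

lemma orth:
  assumes ef: "eigen_fun m eps lam f" and eh: "eigen_fun m eps mu h"
    and lm: "lam \<noteq> mu" and eps: "eps > 0"
  shows "L2_inner m eps f h = 0"
proof -
  obtain g where
    der: "\<forall>j. is_edge m j \<longrightarrow> (\<forall>x\<in>{0..edge_len eps j}.
            (f j has_real_derivative g j x) (at x within {0..edge_len eps j}) \<and>
            (g j has_real_derivative (- lam * f j x)) (at x within {0..edge_len eps j}))" and
    d1: "f 0 0 = 0" and d2: "f 1 (1/2) = 0" and
    cont: "\<forall>j. 2 \<le> j \<and> j < m + 2 \<longrightarrow> f j 0 = f 0 (1/2) \<and> f j eps = f 1 0" and
    k1: "- g 0 (1/2) + (\<Sum>j=2..<m+2. g j 0) = 0" and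
    k2: "g 1 0 + (\<Sum>j=2..<m+2. - g j eps) = 0"
    using ef unfolding eigen_fun_def by blast
  obtain q where
    derh: "\<forall>j. is_edge m j \<longrightarrow> (\<forall>x\<in>{0..edge_len eps j}.
            (h j has_real_derivative q j x) (at x within {0..edge_len eps j}) \<and>
            (q j has_real_derivative (- mu * h j x)) (at x within {0..edge_len eps j}))" and
    e1: "h 0 0 = 0" and e2: "h 1 (1/2) = 0" and
    conth: "\<forall>j. 2 \<le> j \<and> j < m + 2 \<longrightarrow> h j 0 = h 0 (1/2) \<and> h j eps = h 1 0" and
    l1: "- q 0 (1/2) + (\<Sum>j=2..<m+2. q j 0) = 0" and
    l2: "q 1 0 + (\<Sum>j=2..<m+2. - q j eps) = 0"
    using eh unfolding eigen_fun_def by blast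
  define Bd where "Bd j = (g j (edge_len eps j) * h j (edge_len eps j) - f j (edge_len eps j) * q j (edge_len eps j))
     - (g j 0 * h j 0 - f j 0 * q j 0)" for j
  have I: "integral {0..edge_len eps j} (\<lambda>x. f j x * h j x) = Bd j / (mu - lam)" if "j < m + 2" for j
    unfolding Bd_def
    by (rule edge_green) (use that der derh lm eps in \<open>auto simp: is_edge_def edge_len_def\<close>)
  have "L2_inner m eps f h = (\<Sum>j<m+2. Bd j / (mu - lam))"
    unfolding L2_inner_def by (intro sum.cong) (auto simp: I)
  also have "\<dots> = (\<Sum>j<m+2. Bd j) / (mu - lam)" by (simp only: sum_divide_distrib)
  also have "(\<Sum>j<m+2. Bd j) = 0"
  proof -
    have split: "(\<Sum>j<m+2. Bd j) = Bd 0 + Bd 1 + (\<Sum>j=2..<m+2. Bd j)"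
    proof -
      have "(\<Sum>j<m+2. Bd j) = (\<Sum>j=0..<2. Bd j) + (\<Sum>j=2..<m+2. Bd j)"
        using sum.atLeastLessThan_concat[of 0 2 "m+2" Bd] by (simp add: atLeast0LessThan)
      then show ?thesis by (simp add: numeral_2_eq_2)
    qed
    define F2 where "F2 = f 0 (1/2)"
    define F3 where "F3 = f 1 0"
    define H2 where "H2 = h 0 (1/2)"
    define H3 where "H3 = h 1 0"
    have Bj: "Bd j = (g j eps * H3 - F3 * q j eps) - (g j 0 * H2 - F2 * q j 0)" if "j \<in> {2..<m+2}" for j
      using that cont conth by (simp add: Bd_def edge_len_def F2_def F3_def H2_def H3_def)
    have "(\<Sum>j=2..<m+2. Bd j) = H3 * (\<Sum>j=2..<m+2. g j eps) - F3 * (\<Sum>j=2..<m+2. q j eps)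
        - H2 * (\<Sum>j=2..<m+2. g j 0) + F2 * (\<Sum>j=2..<m+2. q j 0)"
      by (simp add: Bj sum.distrib sum_subtractf sum_distrib_left algebra_simps)
    moreover have "Bd 0 = g 0 (1/2) * H2 - F2 * q 0 (1/2)"
      using d1 e1 by (simp add: Bd_def edge_len_def F2_def H2_def)
    moreover have "Bd 1 = - (g 1 0 * H3 - F3 * q 1 0)"
      using d2 e2 by (simp add: Bd_def edge_len_def F3_def H3_def)
    moreover have "g 0 (1/2) = (\<Sum>j=2..<m+2. g j 0)" using k1 by linarith
    moreover have "q 0 (1/2) = (\<Sum>j=2..<m+2. q j 0)" using l1 by linarith
    moreover have "g 1 0 = (\<Sum>j=2..<m+2. g j eps)" using k2 sum_negf[of "\<lambda>j. g j eps" "{2..<m+2}"] by linarith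
    moreover have "q 1 0 = (\<Sum>j=2..<m+2. q j eps)" using l2 sum_negf[of "\<lambda>j. q j eps" "{2..<m+2}"] by linarith
    ultimately show ?thesis using split by (simp add: algebra_simps)
  qed
  finally show ?thesis by simp
qed

definition Sym :: "nat \<Rightarrow> real \<Rightarrow> real \<Rightarrow> real" where
  "Sym m eps t = cos t * cos (eps*t) - real m * sin t * sin (eps*t)"
definition Anti :: "nat \<Rightarrow> real \<Rightarrow> real \<Rightarrow> real" where
  "Anti m eps t = sin t * cos (eps*t) + cos t * sin (eps*t) / real m"

lemma cD_factor:
  assumes "m \<ge> 1"
  shows "cD m eps k = 2 * Sym m eps (k/2) * Anti m eps (k/2)"
proof -
  have k: "k * eps = 2 * (eps * (k/2))" by simp
  show ?thesis unfolding cD_def cA_def cB_def Sym_def Anti_def k sin_double cos_double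
    using assms by (simp add: field_simps power2_eq_square)
qed

lemma quarter_pos:
  fixes a b y :: real
  assumes "a > 0" "b > 0" "0 \<le> y" "y \<le> pi/2"
  shows "a * sin y + b * cos y > 0"
proof (cases "y < pi/2")
  case True
  then have "cos y > 0" using assms by (intro cos_gt_zero_pi) auto
  moreover have "sin y \<ge> 0" using assms by (intro sin_ge_zero) auto
  ultimately show ?thesis using assms by (simp add: add_nonneg_pos)
next
  case False
  then have "y = pi/2" using assms by simp
  then have "sin y = 1" "cos y = 0" using sin_pi_half cos_pi_half by metis+
  then show ?thesis using assms by simp
qed

lemma cos_ge_half: "0 \<le> d \<Longrightarrow> d \<le> pi/3 \<Longrightarrow> cos d \<ge> 1/2"
  using cos_monotone_0_pi_le[of d "pi/3"] cos_60 by simp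

locale gset =
  fixes m :: nat and eps :: real
  assumes m1: "m \<ge> 1" and ep: "0 < eps" and epm: "eps * real m \<le> 1/40"
begin

lemma eps_le: "eps \<le> 1/40"
proof -
  have "eps * 1 \<le> eps * real m" using m1 ep by (intro mult_left_mono) auto
  then show ?thesis using epm by simp
qed

lemma et:
  assumes "0 < t" "t \<le> 3*pi/2"
  shows "0 < eps*t" "eps*t \<le> pi/3" "0 < sin (eps*t)" "cos (eps*t) \<ge> 1/2" "0 < cos (eps*t)"
proof -
  show "0 < eps*t" using ep assms by simp
  have "eps * t \<le> (1/40) * (3*pi/2)" using eps_le assms ep by (intro mult_mono) auto
  also have "\<dots> \<le> pi/3" using pi_gt3 by simp
  finally show "eps*t \<le> pi/3" .
  then show "0 < sin (eps*t)" using \<open>0 < eps*t\<close> pi_gt3 by (intro sin_gt_zero) auto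
  show "cos (eps*t) \<ge> 1/2" using cos_ge_half \<open>0 < eps*t\<close> \<open>eps*t \<le> pi/3\<close> by simp
  then show "0 < cos (eps*t)" by simp
qed

lemma m_pos: "real m > 0" using m1 by simp

lemma Sym_deriv: "(Sym m eps has_real_derivative
   (- (1 + real m * eps) * sin t * cos (eps*t) - (eps + real m) * cos t * sin (eps*t))) (at t)"
  unfolding Sym_def[abs_def] by (auto intro!: derivative_eq_intros simp: algebra_simps)

lemma Anti_deriv: "(Anti m eps has_real_derivative
   ((1 + eps / real m) * cos t * cos (eps*t) - (eps + 1 / real m) * sin t * sin (eps*t))) (at t)"
  unfolding Anti_def[abs_def] using m_pos
  by (auto intro!: derivative_eq_intros simp: field_simps power2_eq_square)

lemma Sym_cont: "continuous_on S (Sym m eps)"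
  unfolding Sym_def[abs_def] by (intro continuous_intros)
lemma Anti_cont: "continuous_on S (Anti m eps)"
  unfolding Anti_def[abs_def] using m_pos by (intro continuous_intros) auto

lemma Sym_dec:
  assumes "0 < a" "a < b" "b \<le> pi/2"
  shows "Sym m eps b < Sym m eps a"
proof (rule DERIV_neg_imp_decreasing[OF \<open>a < b\<close>])
  fix x assume x: "a \<le> x" "x \<le> b"
  have x0: "0 < x" "x \<le> 3*pi/2" using x assms by auto
  have "sin x > 0" using x assms pi_gt3 by (intro sin_gt_zero) auto
  moreover have "cos x \<ge> 0" using x assms by (intro cos_ge_zero) auto
  moreover have "0 < 1 + real m * eps" "0 < eps + real m" using m_pos ep by (smt (verit) mult_pos_pos)+
  ultimately have P: "(1 + real m * eps) * sin x * cos (eps*x) + (eps + real m) * cos x * sin (eps*x) > 0"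
    using et[OF x0] ep by (intro add_pos_nonneg mult_pos_pos mult_nonneg_nonneg) auto
  have "(Sym m eps has_real_derivative - ((1 + real m * eps) * sin x * cos (eps*x) + (eps + real m) * cos x * sin (eps*x))) (at x)"
    using Sym_deriv[of x] by (rule DERIV_cong) (simp add: algebra_simps)
  then show "\<exists>y. (Sym m eps has_real_derivative y) (at x) \<and> y < 0" using P by (intro exI conjI) auto
qed

lemma Sym_neg_mid:
  assumes "pi/2 \<le> t" "t \<le> pi"
  shows "Sym m eps t < 0"
proof -
  have t0: "0 < t" "t \<le> 3*pi/2" using assms pi_gt_zero by linarith+
  have "cos t \<le> 0" using cos_ge_zero[of "t - pi"] assms by simp
  then have c: "cos t * cos (eps*t) \<le> 0" using et[OF t0] by (simp add: mult_nonpos_nonneg)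
  show ?thesis
  proof (cases "t < pi")
    case True
    then have "sin t > 0" using t0 by (intro sin_gt_zero) auto
    then have "real m * sin t * sin (eps*t) > 0" using et[OF t0] m_pos by simp
    then show ?thesis using c unfolding Sym_def by linarith
  next
    case False
    then have "t = pi" using assms by simp
    then show ?thesis using et[OF t0] unfolding Sym_def by simp
  qed
qed

lemma Sym_inc:
  assumes "pi \<le> a" "a < b" "b \<le> 3*pi/2"
  shows "Sym m eps a < Sym m eps b"
proof (rule DERIV_pos_imp_increasing[OF \<open>a < b\<close>])
  fix x assume x: "a \<le> x" "x \<le> b"
  have x0: "0 < x" "x \<le> 3*pi/2" using x assms pi_gt_zero by linarith+
  define y where "y = x - pi"
  have y: "0 \<le> y" "y \<le> pi/2" using x assms by (auto simp: y_def)
  have sx: "sin x = - sin y" and cx: "cos x = - cos y" by (simp_all add: y_def)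
  have "0 < 1 + real m * eps" "0 < eps + real m" using m_pos ep by (smt (verit) mult_pos_pos)+
  then have P: "(1 + real m * eps) * cos (eps*x) * sin y + (eps + real m) * sin (eps*x) * cos y > 0"
    using et[OF x0] by (intro quarter_pos y mult_pos_pos) auto
  have "(Sym m eps has_real_derivative ((1 + real m * eps) * cos (eps*x) * sin y + (eps + real m) * sin (eps*x) * cos y)) (at x)"
    using Sym_deriv[of x] by (rule DERIV_cong) (simp add: sx cx algebra_simps)
  then show "\<exists>y. (Sym m eps has_real_derivative y) (at x) \<and> y > 0" using P by (intro exI conjI) auto
qed

lemma Anti_pos:
  assumes "0 < t" "t \<le> pi/2"
  shows "Anti m eps t > 0"
proof -
  have t0: "0 < t" "t \<le> 3*pi/2" using assms by auto
  have "sin t > 0" using assms pi_gt3 by (intro sin_gt_zero) auto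
  moreover have "cos t \<ge> 0" using assms by (intro cos_ge_zero) auto
  ultimately show ?thesis unfolding Anti_def
    using et[OF t0] m_pos by (intro add_pos_nonneg mult_pos_pos divide_nonneg_pos mult_nonneg_nonneg) auto
qed

lemma Anti_dec:
  assumes "pi/2 \<le> a" "a < b" "b \<le> pi"
  shows "Anti m eps b < Anti m eps a"
proof (rule DERIV_neg_imp_decreasing[OF \<open>a < b\<close>])
  fix x assume x: "a \<le> x" "x \<le> b"
  have x0: "0 < x" "x \<le> 3*pi/2" using x assms pi_gt_zero by linarith+
  define y where "y = x - pi/2"
  have y: "0 \<le> y" "y \<le> pi/2" using x assms by (auto simp: y_def)
  have sx: "sin x = cos y" and cx: "cos x = - sin y"
    by (simp_all add: y_def sin_diff cos_diff)
  have "0 < 1 + eps / real m" "0 < eps + 1 / real m" using m_pos ep by (smt (verit) divide_pos_pos)+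
  then have P: "(1 + eps / real m) * cos (eps*x) * sin y + (eps + 1 / real m) * sin (eps*x) * cos y > 0"
    using et[OF x0] by (intro quarter_pos y mult_pos_pos) auto
  have "(Anti m eps has_real_derivative - ((1 + eps / real m) * cos (eps*x) * sin y + (eps + 1 / real m) * sin (eps*x) * cos y)) (at x)"
    using Anti_deriv[of x] by (rule DERIV_cong) (simp add: sx cx algebra_simps)
  then show "\<exists>y. (Anti m eps has_real_derivative y) (at x) \<and> y < 0" using P by (intro exI conjI) auto
qed

lemma Anti_neg:
  assumes "pi \<le> t" "t \<le> 3*pi/2"
  shows "Anti m eps t < 0"
proof -
  have t0: "0 < t" "t \<le> 3*pi/2" using assms pi_gt_zero by linarith+
  define y where "y = t - pi"
  have y: "0 \<le> y" "y \<le> pi/2" using assms by (auto simp: y_def)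
  have sx: "sin t = - sin y" and cx: "cos t = - cos y" by (simp_all add: y_def)
  have "cos (eps*t) * sin y + (sin (eps*t) / real m) * cos y > 0"
    using et[OF t0] m_pos by (intro quarter_pos y) auto
  then show ?thesis unfolding Anti_def sx cx by (simp add: algebra_simps)
qed

lemma small_angle:
  assumes "0 < t" "t \<le> 3*pi/2"
  shows "real m * sin (eps*t) < cos (eps*t)"
proof -
  have "real m * sin (eps*t) \<le> real m * (eps*t)"
    using sin_x_le_x[of "eps*t"] et[OF assms] by (intro mult_left_mono) auto
  also have "\<dots> = (eps * real m) * t" by simp
  also have "\<dots> \<le> (1/40) * (3*pi/2)" using epm assms ep m_pos by (intro mult_mono) auto
  also have "\<dots> < 1/2" using pi_less_4 by simp
  finally show ?thesis using et[OF assms] by simp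
qed

lemma Sym_0: "Sym m eps 0 = 1" by (simp add: Sym_def)

lemma Sym_half: "Sym m eps (pi/2) < 0"
  using Sym_neg_mid[of "pi/2"] by simp

lemma Sym_5: "Sym m eps (5*pi/4) < 0"
proof -
  have t: "0 < 5*pi/4" "5*pi/4 \<le> 3*pi/2" by auto
  have a: "5*pi/4 = pi/4 + pi" by simp
  have "sin (5*pi/4) = - sin (pi/4)" using sin_periodic_pi[of "pi/4"] a by metis
  then have s5: "sin (5*pi/4) = - (sqrt 2 / 2)" by (simp add: sin_45)
  have "cos (5*pi/4) = - cos (pi/4)" using cos_periodic_pi[of "pi/4"] a by metis
  then have c5: "cos (5*pi/4) = - (sqrt 2 / 2)" by (simp add: cos_45)
  have "Sym m eps (5*pi/4) = (sqrt 2 / 2) * (real m * sin (eps*(5*pi/4)) - cos (eps*(5*pi/4)))"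
    unfolding Sym_def s5 c5 by (simp add: algebra_simps)
  also have "\<dots> < 0" using small_angle[OF t] by (intro mult_pos_neg) auto
  finally show ?thesis .
qed

lemma Sym_3h: "Sym m eps (3*pi/2) > 0"
proof -
  have t: "0 < 3*pi/2" "3*pi/2 \<le> 3*pi/2" by auto
  have a: "3*pi/2 = pi/2 + pi" by simp
  have "sin (3*pi/2) = - sin (pi/2)" using sin_periodic_pi[of "pi/2"] a by metis
  then have s5: "sin (3*pi/2) = - 1" by simp
  have "cos (3*pi/2) = - cos (pi/2)" using cos_periodic_pi[of "pi/2"] a by metis
  then have c5: "cos (3*pi/2) = 0" by simp
  have "Sym m eps (3*pi/2) = real m * sin (eps*(3*pi/2))"
    unfolding Sym_def s5 c5 by simp
  also have "\<dots> > 0" using et[OF t] m_pos by simp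
  finally show ?thesis .
qed

lemma Anti_34: "Anti m eps (3*pi/4) > 0"
proof -
  have t: "0 < 3*pi/4" "3*pi/4 \<le> 3*pi/2" by auto
  have a: "3*pi/4 = pi - pi/4" by simp
  have "sin (3*pi/4) = sin (pi/4)" using sin_pi_minus[of "pi/4"] a by metis
  then have s5: "sin (3*pi/4) = sqrt 2 / 2" by (simp add: sin_45)
  have "cos (3*pi/4) = - cos (pi/4)" using cos_pi_minus[of "pi/4"] a by metis
  then have c5: "cos (3*pi/4) = - (sqrt 2 / 2)" by (simp add: cos_45)
  have "Anti m eps (3*pi/4) = (sqrt 2 / 2) * (cos (eps*(3*pi/4)) - sin (eps*(3*pi/4)) / real m)"
    unfolding Anti_def s5 c5 by (simp add: algebra_simps)
  also have "\<dots> > 0"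
  proof -
    have s: "0 < sin (eps*(3*pi/4))" using et[OF t] by simp
    have "sin (eps*(3*pi/4)) / real m \<le> sin (eps*(3*pi/4))"
      using s m1 by (simp add: divide_le_eq)
    also have "\<dots> \<le> real m * sin (eps*(3*pi/4))" using s m1 by simp
    also have "\<dots> < cos (eps*(3*pi/4))" using small_angle[OF t] .
    finally show ?thesis by simp
  qed
  finally show ?thesis .
qed

lemma Anti_pi: "Anti m eps pi < 0"
  using Anti_neg[of pi] by simp

lemma roots:
  obtains t1 t2 t3 where "0 < t1" "t1 < pi/2" "3*pi/4 < t2" "t2 < pi" "5*pi/4 < t3" "t3 < 3*pi/2"
    "Sym m eps t1 = 0" "Anti m eps t2 = 0" "Sym m eps t3 = 0"
    "\<And>t. 0 < t \<Longrightarrow> t \<le> t3 \<Longrightarrow> Sym m eps t = 0 \<or> Anti m eps t = 0 \<Longrightarrow> t = t1 \<or> t = t2 \<or> t = t3"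
proof -
  obtain t1 where t1: "0 \<le> t1" "t1 \<le> pi/2" "Sym m eps t1 = 0"
    using IVT2'[of "Sym m eps" "pi/2" 0 0] Sym_half Sym_0 Sym_cont by auto
  have "t1 \<noteq> pi/2" "t1 \<noteq> 0" using t1(3) Sym_half Sym_0 by (metis less_irrefl zero_neq_one)+
  then have t1': "0 < t1" "t1 < pi/2" using t1 by linarith+
  obtain t3 where t3: "5*pi/4 \<le> t3" "t3 \<le> 3*pi/2" "Sym m eps t3 = 0"
    using IVT'[of "Sym m eps" "5*pi/4" 0 "3*pi/2"] Sym_5 Sym_3h Sym_cont by auto
  have "t3 \<noteq> 5*pi/4" "t3 \<noteq> 3*pi/2" using t3(3) Sym_5 Sym_3h by (metis less_irrefl zero_neq_one)+
  then have t3': "5*pi/4 < t3" "t3 < 3*pi/2" using t3 by linarith+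
  obtain t2 where t2: "3*pi/4 \<le> t2" "t2 \<le> pi" "Anti m eps t2 = 0"
    using IVT2'[of "Anti m eps" pi 0 "3*pi/4"] Anti_34 Anti_pi Anti_cont by auto
  have "t2 \<noteq> 3*pi/4" "t2 \<noteq> pi" using t2(3) Anti_34 Anti_pi by (metis less_irrefl zero_neq_one)+
  then have t2': "3*pi/4 < t2" "t2 < pi" using t2 by linarith+
  show ?thesis
  proof (rule that[OF t1' t2' t3' t1(3) t2(3) t3(3)])
    fix t assume t: "0 < t" "t \<le> t3" and z: "Sym m eps t = 0 \<or> Anti m eps t = 0"
    show "t = t1 \<or> t = t2 \<or> t = t3"
    proof (cases "t < pi/2")
      case True
      then have "Anti m eps t > 0" using t by (intro Anti_pos) auto
      then have "Sym m eps t = 0" using z by auto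
      then have "t = t1" using Sym_dec[of t t1] Sym_dec[of t1 t] t1 t1' t True
        by (cases t t1 rule: linorder_cases) auto
      then show ?thesis by simp
    next
      case False
      show ?thesis
      proof (cases "t \<le> pi")
        case True
        then have "Sym m eps t < 0" using False by (intro Sym_neg_mid) auto
        then have "Anti m eps t = 0" using z by auto
        then have "t = t2" using Anti_dec[of t t2] Anti_dec[of t2 t] t2 t2' t True False
          by (cases t t2 rule: linorder_cases) auto
        then show ?thesis by simp
      next
        case False
        then have "Anti m eps t < 0" using t t3' by (intro Anti_neg) auto
        then have "Sym m eps t = 0" using z by auto
        then have "t = t3" using Sym_inc[of t t3] t3 t3' t False
          by (cases t t3 rule: linorder_cases) auto
        then show ?thesis by simp
      qed
    qed
  qed
qed

end

lemma sin_minus_xcos: "0 \<le> x \<Longrightarrow> x \<le> pi \<Longrightarrow> x * cos x \<le> sin x"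
proof -
  assume x: "0 \<le> x" "x \<le> pi"
  have "(\<lambda>x. sin x - x * cos x) 0 \<le> (\<lambda>x. sin x - x * cos x) x"
  proof (rule DERIV_nonneg_imp_nondecreasing[OF x(1)])
    fix y assume y: "0 \<le> y" "y \<le> x"
    have "((\<lambda>x. sin x - x * cos x) has_real_derivative y * sin y) (at y)"
      by (auto intro!: derivative_eq_intros simp: algebra_simps)
    moreover have "y * sin y \<ge> 0" using y x by (intro mult_nonneg_nonneg sin_ge_zero) auto
    ultimately show "\<exists>d. ((\<lambda>x. sin x - x * cos x) has_real_derivative d) (at y) \<and> d \<ge> 0" by blast
  qed
  then show ?thesis by simp
qed

lemma sinc_dec:
  assumes "0 < a" "a \<le> b" "b \<le> pi"
  shows "a * sin b \<le> b * sin a"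
proof -
  have "(\<lambda>x. sin x / x) b \<le> (\<lambda>x. sin x / x) a"
  proof (rule DERIV_nonpos_imp_nonincreasing[OF assms(2)])
    fix y assume y: "a \<le> y" "y \<le> b"
    then have y0: "y > 0" using assms by simp
    have "((\<lambda>x. sin x / x) has_real_derivative (cos y * y - sin y) / y^2) (at y)"
      using y0 by (auto intro!: derivative_eq_intros simp: power2_eq_square)
    moreover have "(cos y * y - sin y) / y^2 \<le> 0"
      using sin_minus_xcos[of y] y assms by (intro divide_nonpos_nonneg) (auto simp: mult.commute)
    ultimately show "\<exists>d. ((\<lambda>x. sin x / x) has_real_derivative d) (at y) \<and> d \<le> 0" by blast
  qed
  then show ?thesis using assms by (simp add: field_simps)
qed

lemma sin_concave:
  assumes "0 \<le> r" "r \<le> 1" "0 \<le> z" "z \<le> pi"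
  shows "r * sin z \<le> sin (r * z)"
proof (cases "r = 0 \<or> z = 0")
  case True
  then show ?thesis by auto
next
  case False
  then have rz: "0 < r * z" using assms by simp
  have "r * z \<le> z" using assms by (simp add: mult_left_le_one_le)
  from sinc_dec[OF rz this assms(4)] have "r * z * sin z \<le> z * sin (r * z)" .
  then show ?thesis using False assms by (simp add: mult.assoc mult.left_commute[of r z])
qed

lemma jordan:
  assumes "0 \<le> y" "y \<le> pi/2"
  shows "2 / pi * y \<le> sin y"
proof -
  have "(2 * y / pi) * sin (pi/2) \<le> sin ((2 * y / pi) * (pi/2))"
    using assms by (intro sin_concave) (auto simp: field_simps)
  then show ?thesis by simp
qed

lemma one_minus_cos: "1 - cos (z::real) \<le> z^2 / 2"
proof -
  have "cos z = cos (2 * (z/2))" by simp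
  also have "\<dots> = 1 - 2 * sin (z/2) ^ 2" by (rule cos_double_sin)
  finally have "1 - cos z = 2 * sin (z/2) ^ 2" by simp
  also have "\<dots> \<le> 2 * (z/2)^2"
    using abs_sin_x_le_abs_x[of "z/2"] by (simp add: abs_le_square_iff power_mono_iff) (metis abs_le_square_iff abs_sin_x_le_abs_x)
  finally show ?thesis by (simp add: power2_eq_square)
qed

locale zset = gset +
  fixes t2 t3 :: real
  assumes t2: "3*pi/4 < t2" "t2 < pi" and t3: "5*pi/4 < t3" "t3 < 3*pi/2"
    and A2: "Anti m eps t2 = 0" and S3: "Sym m eps t3 = 0"
begin

definition "bb = - sin t2 / sin t3"

lemma s2pos: "sin t2 > 0" using t2 by (intro sin_gt_zero) auto
lemma c2neg: "cos t2 < 0"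
proof -
  have "cos t2 < cos (pi/2)" using t2 by (intro cos_monotone_0_pi) auto
  then show ?thesis by simp
qed
lemma s3neg: "sin t3 < 0" using t3 by (intro sin_lt_zero) auto
lemma c3neg: "cos t3 < 0"
proof -
  have "cos (t3 - pi) > 0" using t3 by (intro cos_gt_zero_pi) auto
  then show ?thesis by simp
qed

lemma bb_pos: "bb > 0" using s2pos s3neg unfolding bb_def by (simp add: divide_pos_neg)
lemma bb_eq: "sin t2 + bb * sin t3 = 0" using s3neg unfolding bb_def by simp

lemma t2e: "0 < t2" "t2 \<le> 3*pi/2" using t2 pi_gt_zero by linarith+
lemma t3e: "0 < t3" "t3 \<le> 3*pi/2" using t3 pi_gt_zero by linarith+

lemma s2_small: "sin t2 < 1/5"
proof -
  have A: "sin t2 * cos (eps*t2) = (- cos t2) * sin (eps*t2) / real m"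
    using A2 unfolding Anti_def by (simp add: field_simps)
  have "(- cos t2) * sin (eps*t2) / real m \<le> sin (eps*t2)"
  proof -
    have "(- cos t2) * sin (eps*t2) \<le> 1 * sin (eps*t2)"
      using et[OF t2e] by (intro mult_right_mono) auto
    also have "\<dots> \<le> real m * sin (eps*t2)" using et[OF t2e] m1 by simp
    finally have "(- cos t2) * sin (eps*t2) \<le> sin (eps*t2) * real m" by (simp add: mult.commute)
    then show ?thesis using m_pos by (simp only: divide_le_eq) simp
  qed
  also have "\<dots> \<le> eps * t2" using sin_x_le_x et[OF t2e] by simp
  also have "\<dots> \<le> (1/40) * t2" using eps_le t2e by (intro mult_right_mono) auto
  also have "\<dots> < (1/40) * 4" using t2 pi_less_4 by simp
  finally have "sin t2 * cos (eps*t2) < 1/10" using A by simp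
  moreover have "cos (eps*t2) \<ge> 1/2" using et[OF t2e] by simp
  ultimately have "sin t2 * (1/2) < 1/10"
    using s2pos by (smt (verit) mult_left_mono)
  then show ?thesis by simp
qed

lemma s3_big: "(sin t3)^2 > 1/2"
proof -
  define a where "a = - sin t3"
  define c where "c = - cos t3"
  have a: "a > 0" and c: "c > 0" using s3neg c3neg by (auto simp: a_def c_def)
  have "c * cos (eps*t3) = real m * a * sin (eps*t3)"
    using S3 unfolding Sym_def a_def c_def by (simp add: algebra_simps)
  also have "\<dots> < a * cos (eps*t3)"
    using small_angle[OF t3e] a by (simp add: mult.assoc)
  finally have "c < a" using et[OF t3e] by simp
  then have "c^2 < a^2" using c by (simp add: power_strict_mono)
  moreover have "a^2 + c^2 = 1" unfolding a_def c_def by simp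
  ultimately show ?thesis unfolding a_def by simp
qed

lemma bb_half: "bb < 1/2"
proof -
  have "(2 * sin t2)^2 < (- sin t3)^2"
  proof -
    have "(2 * sin t2)^2 < (2 * (1/5))^2" using s2pos s2_small by (intro power_strict_mono) auto
    also have "\<dots> < 1/2" by (simp add: power2_eq_square)
    also have "\<dots> < (- sin t3)^2" using s3_big by simp
    finally show ?thesis .
  qed
  then have "2 * sin t2 < - sin t3"
    using s3neg by (smt (verit) power_mono s2pos)
  then show ?thesis unfolding bb_def using s3neg by (simp add: field_simps)
qed

lemma t23: "t3 < 2 * t2" using t2 t3 by linarith

lemma e0:
  assumes x: "0 < x" "x < 1/2"
  shows "sin (2*t2*x) + bb * sin (2*t3*x) > 0"
proof -
  have s2x: "sin (2*t2*x) > 0"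
  proof (rule sin_gt_zero)
    show "0 < 2*t2*x" using x t2e by simp
    have "2*t2*x < 2*t2*(1/2)" using x t2e by (intro mult_strict_left_mono) auto
    also have "2*t2*(1/2) = t2" by simp
    finally show "2*t2*x < pi" using t2(2) by (rule less_trans)
  qed
  show ?thesis
  proof (cases "2*t3*x \<le> pi")
    case True
    then have "sin (2*t3*x) \<ge> 0" using x t3e by (intro sin_ge_zero) auto
    then show ?thesis using s2x bb_pos by (simp add: add_pos_nonneg)
  next
    case False
    have "2*t3*x < 2*t3*(1/2)" using x t3e by (intro mult_strict_left_mono) auto
    then have up3: "2*t3*x < t3" by simp
    have "2*t2*x < 2*t2*(1/2)" using x t2e by (intro mult_strict_left_mono) auto
    then have up2: "2*t2*x < t2" by simp
    have "sin (2*t3*x - pi) < sin (t3 - pi)"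
      using False up3 t3 by (intro sin_monotone_2pi) auto
    then have A: "sin (2*t3*x) > sin t3" by simp
    have "2*t3*x < 2*(2*t2*x)" using t23 x by (simp add: mult.assoc)
    then have low2: "pi/2 < 2*t2*x" using False by linarith
    have "sin (pi - t2) < sin (pi - 2*t2*x)"
      using low2 up2 t2 by (intro sin_monotone_2pi) auto
    then have B: "sin (2*t2*x) > sin t2" by simp
    have "bb * sin (2*t3*x) > bb * sin t3" using A bb_pos by simp
    then show ?thesis using B bb_eq by linarith
  qed
qed

lemma e1:
  assumes x: "0 \<le> x" "x < 1/2"
  shows "(- sin t2 * cos (2*t2*x) + cos t2 * sin (2*t2*x)) + bb * (sin t3 * cos (2*t3*x) - cos t3 * sin (2*t3*x)) < 0"
proof -
  define y where "y = 1/2 - x"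
  have y: "0 < y" "y \<le> 1/2" using x by (auto simp: y_def)
  have r2: "- sin t2 * cos (2*t2*x) + cos t2 * sin (2*t2*x) = - sin (2*t2*y)"
  proof -
    have "2*t2*y = t2 - 2*t2*x" by (simp add: y_def algebra_simps)
    then show ?thesis by (simp add: sin_diff)
  qed
  have r3: "sin t3 * cos (2*t3*x) - cos t3 * sin (2*t3*x) = sin (2*t3*y)"
  proof -
    have "2*t3*y = t3 - 2*t3*x" by (simp add: y_def algebra_simps)
    then show ?thesis by (simp add: sin_diff)
  qed
  have s2y: "sin (2*t2*y) > 0"
  proof (rule sin_gt_zero)
    show "0 < 2*t2*y" using y t2e by simp
    have "2*t2*y \<le> 2*t2*(1/2)" using y t2e by (intro mult_left_mono) auto
    also have "2*t2*(1/2) = t2" by simp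
    finally show "2*t2*y < pi" using t2(2) by (rule le_less_trans)
  qed
  have "- sin (2*t2*y) + bb * sin (2*t3*y) < 0"
  proof (cases "pi \<le> 2*t3*y")
    case True
    have "2*t3*y \<le> 2*t3*(1/2)" using y t3e by (intro mult_left_mono) auto
    then have "2*t3*y \<le> t3" by simp
    then have "2*t3*y - pi \<le> pi" using t3(2) pi_gt_zero by linarith
    then have "sin (2*t3*y - pi) \<ge> 0" using True by (intro sin_ge_zero) auto
    then have "sin (2*t3*y) \<le> 0" by simp
    then have "bb * sin (2*t3*y) \<le> 0" using bb_pos by (simp add: mult_nonneg_nonpos)
    then show ?thesis using s2y by linarith
  next
    case False
    have z: "0 < 2*t3*y" using y t3e by simp
    have sz: "sin (2*t3*y) > 0" using z False by (intro sin_gt_zero) auto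
    have "(t2/t3) * sin (2*t3*y) \<le> sin ((t2/t3) * (2*t3*y))"
      using t2e t3e t2 t3 z False by (intro sin_concave) auto
    also have "(t2/t3) * (2*t3*y) = 2*t2*y" using t3e by simp
    finally have c: "(t2/t3) * sin (2*t3*y) \<le> sin (2*t2*y)" .
    have "1/2 \<le> t2/t3" using t23 t3e by (simp add: field_simps)
    then have "(1/2) * sin (2*t3*y) \<le> (t2/t3) * sin (2*t3*y)" using sz by (intro mult_right_mono) auto
    moreover have "bb * sin (2*t3*y) < (1/2) * sin (2*t3*y)" using bb_half sz by simp
    ultimately show ?thesis using c by linarith
  qed
  then show ?thesis unfolding r2 r3 by simp
qed

lemma ep:
  assumes x: "0 < x" "x \<le> eps"
  shows "(sin t2 * cos (2*t2*x) + cos t2 / real m * sin (2*t2*x)) +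
         bb * (sin t3 * cos (2*t3*x) + cos t3 / real m * sin (2*t3*x)) < 0"
proof -
  define D where "D = cos (2*t2*x) - cos (2*t3*x)"
  define Cc where "Cc = - cos t2 / real m"
  define S where "S = sin (2*t2*x)"
  define cd where "cd = cos (eps*t2)"
  define sd where "sd = sin (eps*t2)"
  have xe: "x \<le> 1/40" using x eps_le by simp
  have e: "bb * sin t3 = - sin t2" using bb_eq by linarith
  have "(sin t2 * cos (2*t2*x) + cos t2 / real m * sin (2*t2*x)) +
         bb * (sin t3 * cos (2*t3*x) + cos t3 / real m * sin (2*t3*x)) =
        sin t2 * cos (2*t2*x) + cos t2 / real m * sin (2*t2*x) + (bb * sin t3) * cos (2*t3*x)
         + bb * (cos t3 / real m * sin (2*t3*x))"
    by (simp add: distrib_left mult.assoc)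
  also have "\<dots> = sin t2 * D + cos t2 / real m * sin (2*t2*x) + bb * (cos t3 / real m * sin (2*t3*x))"
    unfolding e D_def by (simp add: right_diff_distrib)
  finally have re: "(sin t2 * cos (2*t2*x) + cos t2 / real m * sin (2*t2*x)) +
         bb * (sin t3 * cos (2*t3*x) + cos t3 / real m * sin (2*t3*x)) =
         sin t2 * D + cos t2 / real m * sin (2*t2*x) + bb * (cos t3 / real m * sin (2*t3*x))" .
  have s3x: "sin (2*t3*x) > 0"
  proof (rule sin_gt_zero)
    show "0 < 2*t3*x" using x t3e by simp
    have "2*t3*x \<le> 2*(3*pi/2)*(1/40)" using x xe t3 t3e by (intro mult_mono) auto
    then show "2*t3*x < pi" using pi_gt_zero by linarith
  qed
  have "cos t3 / real m < 0" using c3neg m_pos by (simp add: divide_neg_pos)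
  then have "cos t3 / real m * sin (2*t3*x) \<le> 0" using s3x
    by (intro mult_nonpos_nonneg) auto
  then have third: "bb * (cos t3 / real m * sin (2*t3*x)) \<le> 0"
    by (rule mult_nonneg_nonpos[OF less_imp_le[OF bb_pos]])
  have x2: "2*t2*x \<le> pi/2"
  proof -
    have "2*t2*x \<le> 2*pi*(1/40)" using x xe t2 t2e by (intro mult_mono) auto
    then show ?thesis using pi_gt_zero by linarith
  qed
  have jor: "2 / pi * (2*t2*x) \<le> sin (2*t2*x)" using jordan[of "2*t2*x"] x2 x t2e by simp
  have Dle: "D \<le> S"
  proof -
    have "D \<le> 1 - cos (2*t3*x)" unfolding D_def by simp
    also have "\<dots> \<le> (2*t3*x)^2 / 2" by (rule one_minus_cos)
    also have "\<dots> \<le> 2 / pi * (2*t2*x)"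
    proof -
      have "t3^2 \<le> 36"
      proof -
        have "t3 \<le> 6" using t3 pi_less_4 by linarith
        then have "t3 * t3 \<le> 6 * 6" using t3e by (intro mult_mono) auto
        then show ?thesis by (simp add: power2_eq_square)
      qed
      then have "t3^2 * x * pi \<le> 36 * (1/40) * 4"
        using xe x pi_less_4 by (intro mult_mono) auto
      also have "\<dots> < 2 * t2" using t2 pi_gt3 by linarith
      finally have "t3^2 * x * pi < 2 * t2" .
      then have h: "(t3^2 * x * pi) * (2 * x / pi) \<le> (2 * t2) * (2 * x / pi)"
        using x pi_gt_zero by (intro mult_right_mono) auto
      have l: "(2*t3*x)^2 / 2 = (t3^2 * x * pi) * (2 * x / pi)"
        using pi_gt_zero by (simp add: power2_eq_square)
      have r: "2 / pi * (2*t2*x) = (2 * t2) * (2 * x / pi)" by simp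
      show ?thesis unfolding l r by (rule h)
    qed
    finally show ?thesis using jor unfolding S_def by linarith
  qed
  have A: "sin t2 * cd = Cc * sd"
    using A2 unfolding Anti_def Cc_def cd_def sd_def using m_pos by (simp add: field_simps)
  have sc: "sd < cd"
  proof -
    have "sin (eps*t2) \<le> real m * sin (eps*t2)" using et[OF t2e] m1 by simp
    then show ?thesis using small_angle[OF t2e] unfolding sd_def cd_def by linarith
  qed
  have C: "Cc > 0" using c2neg m_pos unfolding Cc_def by (simp add: divide_neg_pos)
  have s2x: "S > 0" unfolding S_def using x t2e x2 by (intro sin_gt_zero) auto
  have sdp: "sd > 0" "cd > 0" using et[OF t2e] unfolding sd_def cd_def by auto
  have "sin t2 * D * cd = (sin t2 * cd) * D" by (simp add: algebra_simps)
  also have "\<dots> = (Cc * sd) * D" by (simp add: A)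
  also have "\<dots> \<le> (Cc * sd) * S" using C sdp Dle by (intro mult_left_mono) auto
  also have "\<dots> < (Cc * cd) * S" using C sc s2x by (intro mult_strict_right_mono) auto
  also have "\<dots> = (Cc * S) * cd" by (simp add: algebra_simps)
  finally have "(sin t2 * D) * cd < (Cc * S) * cd" .
  then have "sin t2 * D < Cc * S" using sdp by (simp add: mult_less_cancel_right)
  moreover have "Cc * S = - (cos t2 / real m * sin (2*t2*x))" unfolding Cc_def S_def by simp
  ultimately show ?thesis unfolding re using third by linarith
qed

end

lemma cA_anti:
  assumes m: "m \<ge> 1" and A: "Anti m eps t = 0"
  shows "cA m eps (2*t) = - sin t" "cB m eps (2*t) = cos t"
proof -
  have d: "2 * t * eps = 2 * (eps * t)" by simp
  have "cA m eps (2*t) + sin t = 2 * cos (eps*t) * Anti m eps t"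
    unfolding cA_def Anti_def d sin_double cos_double_cos using m
    by (simp add: field_simps power2_eq_square)
  then show "cA m eps (2*t) = - sin t" using A by simp
  have "cB m eps (2*t) - cos t = - 2 * real m * sin (eps*t) * Anti m eps t"
    unfolding cB_def Anti_def d sin_double cos_double_sin using m
    by (simp add: field_simps power2_eq_square)
  then show "cB m eps (2*t) = cos t" using A by simp
qed

lemma cA_sym:
  assumes m: "m \<ge> 1" and S: "Sym m eps t = 0"
  shows "cA m eps (2*t) = sin t" "cB m eps (2*t) = - cos t"
proof -
  have d: "2 * t * eps = 2 * (eps * t)" by simp
  have "cA m eps (2*t) - sin t = 2 * sin (eps*t) / real m * Sym m eps t"
    unfolding cA_def Sym_def d sin_double cos_double_sin using m
    by (simp add: field_simps power2_eq_square)
  then show "cA m eps (2*t) = sin t" using S by simp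
  have "cB m eps (2*t) + cos t = 2 * cos (eps*t) * Sym m eps t"
    unfolding cB_def Sym_def d sin_double cos_double_cos using m
    by (simp add: field_simps power2_eq_square)
  then show "cB m eps (2*t) = - cos t" using S by simp
qed

lemma wf0: "0 \<le> x \<Longrightarrow> x \<le> 1/2 \<Longrightarrow> wf m eps k 0 x = sin (k*x)"
  by (simp add: wf_def wr_def is_edge_def edge_len_def)
lemma wf1: "0 \<le> x \<Longrightarrow> x \<le> 1/2 \<Longrightarrow> wf m eps k 1 x = cA m eps k * cos (k*x) + cB m eps k * sin (k*x)"
  by (simp add: wf_def wr_def is_edge_def edge_len_def)
lemma wfj: "2 \<le> j \<Longrightarrow> j < m + 2 \<Longrightarrow> 0 \<le> x \<Longrightarrow> x \<le> eps \<Longrightarrow>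
   wf m eps k j x = sin (k/2) * cos (k*x) + cos (k/2) / real m * sin (k*x)"
  by (simp add: wf_def wr_def is_edge_def edge_len_def)

context zset
begin

lemma zp: "zero_points m eps (\<lambda>j x. wf m eps (2*t2) j x + bb * wf m eps (2*t3) j x) = {V2}"
proof -
  have a2: "cA m eps (2*t2) = - sin t2" "cB m eps (2*t2) = cos t2" using cA_anti[OF m1 A2] by auto
  have a3: "cA m eps (2*t3) = sin t3" "cB m eps (2*t3) = - cos t3" using cA_sym[OF m1 S3] by auto
  have v2: "wf m eps (2*t2) 0 (1/2) + bb * wf m eps (2*t3) 0 (1/2) = 0"
    using bb_eq by (simp add: wf0)
  have v3: "wf m eps (2*t2) 1 0 + bb * wf m eps (2*t3) 1 0 \<noteq> 0"
    using e1[of 0] wf1[of 0 m eps "2*t2"] wf1[of 0 m eps "2*t3"] a2 a3 by simp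
  have E0: "wf m eps (2*t2) 0 x + bb * wf m eps (2*t3) 0 x \<noteq> 0" if "0 < x" "x < 1/2" for x
    using e0[OF that] that by (simp add: wf0)
  have E1: "wf m eps (2*t2) 1 x + bb * wf m eps (2*t3) 1 x \<noteq> 0" if "0 < x" "x < 1/2" for x
  proof -
    have "wf m eps (2*t2) 1 x + bb * wf m eps (2*t3) 1 x =
      (- sin t2 * cos (2*t2*x) + cos t2 * sin (2*t2*x)) + bb * (sin t3 * cos (2*t3*x) - cos t3 * sin (2*t3*x))"
      using wf1[of x m eps "2*t2"] wf1[of x m eps "2*t3"] a2 a3 that by simp
    then show ?thesis using e1[of x] that by simp
  qed
  have Ej: "wf m eps (2*t2) j x + bb * wf m eps (2*t3) j x \<noteq> 0" if "2 \<le> j" "j < m + 2" "0 < x" "x < eps" for j x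
    using ep[of x] that by (simp add: wfj)
  show ?thesis
  proof (intro set_eqI iffI)
    fix p assume p: "p \<in> zero_points m eps (\<lambda>j x. wf m eps (2*t2) j x + bb * wf m eps (2*t3) j x)"
    show "p \<in> {V2}"
    proof (cases p)
      case V2 then show ?thesis by simp
    next
      case V3 then show ?thesis using p v3 by (simp add: zero_points_def)
    next
      case (EdgePt j x)
      then have h: "is_edge m j" "0 < x" "x < edge_len eps j"
        "wf m eps (2*t2) j x + bb * wf m eps (2*t3) j x = 0"
        using p by (auto simp: zero_points_def)
      show ?thesis
      proof (cases "j = 0")
        case True then show ?thesis using h E0 by (auto simp: edge_len_def)
      next
        case j0: False
        show ?thesis
        proof (cases "j = 1")
          case True then show ?thesis using h E1 by (auto simp: edge_len_def)
        next
          case False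
          then show ?thesis using h Ej[of j x] j0 by (auto simp: edge_len_def is_edge_def)
        qed
      qed
    qed
  next
    fix p assume "p \<in> {V2}"
    then show "p \<in> zero_points m eps (\<lambda>j x. wf m eps (2*t2) j x + bb * wf m eps (2*t3) j x)"
      using v2 by (simp add: zero_points_def)
  qed
qed

end


lemma zp_scale: "c \<noteq> 0 \<Longrightarrow> zero_points m eps (\<lambda>j x. c * u j x) = zero_points m eps u"
  by (simp add: zero_points_def)

lemma sin_keps:
  assumes "gset m eps" "0 < k" "k \<le> 3*pi"
  shows "sin (k*eps) > 0"
proof -
  interpret gset m eps by (rule assms(1))
  have t: "0 < k/2" "k/2 \<le> 3*pi/2" using assms by auto
  have e: "k*eps = 2 * (eps*(k/2))" by simp
  have "0 < 2 * (eps*(k/2))" "2 * (eps*(k/2)) < pi" using et[OF t] by auto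
  then have "0 < k*eps" "k*eps < pi" unfolding e by auto
  then show ?thesis by (rule sin_gt_zero)
qed

theorem lemma19:
  fixes m :: nat
  assumes "m \<ge> 1"
  shows "\<exists>eps > 0.
           (\<exists>f1 f2 f3. first_three_eigenfunctions m eps f1 f2 f3) \<and>
           (\<forall>f1 f2 f3. first_three_eigenfunctions m eps f1 f2 f3 \<longrightarrow>
              (\<exists>b :: real. num_zeros m eps (\<lambda>j x. f2 j x + b * f3 j x) = 1))"
proof -
  define eps where "eps = 1 / (40 * real m)"
  have mpos: "real m > 0" using assms by simp
  have eps0: "eps > 0" using mpos by (simp add: eps_def)
  have G: "gset m eps" using assms mpos by unfold_locales (auto simp: eps_def)
  interpret gset m eps by (rule G)
  obtain t1 t2 t3 where r: "0 < t1" "t1 < pi/2" "3*pi/4 < t2" "t2 < pi" "5*pi/4 < t3" "t3 < 3*pi/2"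
    "Sym m eps t1 = 0" "Anti m eps t2 = 0" "Sym m eps t3 = 0"
    and rc: "\<And>t. 0 < t \<Longrightarrow> t \<le> t3 \<Longrightarrow> Sym m eps t = 0 \<or> Anti m eps t = 0 \<Longrightarrow> t = t1 \<or> t = t2 \<or> t = t3"
    using roots by blast
  interpret zset m eps t2 t3 using r by unfold_locales auto
  define l1 where "l1 = (2*t1)^2"
  define l2 where "l2 = (2*t2)^2"
  define l3 where "l3 = (2*t3)^2"
  have tpos: "0 < t2" "0 < t3" using r pi_gt_zero by linarith+
  have cD1: "cD m eps (2*t1) = 0" using cD_factor[OF assms] r by simp
  have cD2: "cD m eps (2*t2) = 0" using cD_factor[OF assms] r by simp
  have cD3: "cD m eps (2*t3) = 0" using cD_factor[OF assms] r by simp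
  have E1: "eigen_fun m eps l1 (wf m eps (2*t1))" unfolding l1_def using w_eigen[OF assms cD1] eps0 by simp
  have E2: "eigen_fun m eps l2 (wf m eps (2*t2))" unfolding l2_def using w_eigen[OF assms cD2] eps0 by simp
  have E3: "eigen_fun m eps l3 (wf m eps (2*t3))" unfolding l3_def using w_eigen[OF assms cD3] eps0 by simp
  have nzw: "wf m eps (2*t) \<noteq> (\<lambda>j x. 0)" if "sin t \<noteq> 0" for t
  proof
    assume "wf m eps (2*t) = (\<lambda>j x. 0)"
    then have "wf m eps (2*t) 0 (1/2) = 0" by simp
    then show False using that by (simp add: wf0)
  qed
  have "sin t1 > 0" using r pi_gt3 by (intro sin_gt_zero) auto
  then have N1: "wf m eps (2*t1) \<noteq> (\<lambda>j x. 0)" by (intro nzw) simp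
  have N2: "wf m eps (2*t2) \<noteq> (\<lambda>j x. 0)" using s2pos by (intro nzw) simp
  have N3: "wf m eps (2*t3) \<noteq> (\<lambda>j x. 0)" using s3neg by (intro nzw) simp
  have cl: "\<exists>c. f = (\<lambda>j x. c * wf m eps (2*t) j x) \<and> (c \<noteq> 0 \<longrightarrow> cD m eps (2*t) = 0)"
    if "0 < t" "t \<le> t3" "eigen_fun m eps ((2*t)^2) f" for t f
  proof (rule classify[OF assms eps0 _ _ that(3)])
    show "0 < 2*t" using that by simp
    show "sin (2*t*eps) \<noteq> 0" using sin_keps[OF G, of "2*t"] that r by simp
  qed
  have cD_iff: "cD m eps (2*t) = 0 \<Longrightarrow> t = t1 \<or> t = t2 \<or> t = t3" if "0 < t" "t \<le> t3" for t
    using rc[OF that] cD_factor[OF assms, of eps "2*t"] by auto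
  have M1: "multiplicity m eps l1 = 1"
    by (rule mult_one[OF _ E1 N1], rule exE[OF cl[of t1]]) (use r tpos in \<open>auto simp: l1_def\<close>)
  have M2: "multiplicity m eps l2 = 1"
    by (rule mult_one[OF _ E2 N2], rule exE[OF cl[of t2]]) (use r tpos in \<open>auto simp: l2_def\<close>)
  have M3: "multiplicity m eps l3 = 1"
    by (rule mult_one[OF _ E3 N3], rule exE[OF cl[of t3]]) (use r tpos in \<open>auto simp: l3_def\<close>)
  have M0: "multiplicity m eps lam = 0" if "lam \<le> l3" "lam \<noteq> l1" "lam \<noteq> l2" "lam \<noteq> l3" for lam
  proof (rule mult_zero)
    fix f assume ef: "eigen_fun m eps lam f"
    show "f = (\<lambda>j x. 0)"
    proof (cases "lam \<le> 0")
      case True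
      show ?thesis using nonpos_zero[OF ef True eps0] .
    next
      case False
      define t where "t = sqrt lam / 2"
      have t0: "0 < t" using False by (simp add: t_def)
      have lt: "lam = (2*t)^2" using False by (simp add: t_def)
      have "sqrt lam \<le> sqrt l3" using that by simp
      moreover have "sqrt l3 = 2*t3"
      proof -
        have "sqrt l3 = \<bar>2*t3\<bar>" unfolding l3_def by (rule real_sqrt_abs)
        then show ?thesis using tpos by simp
      qed
      ultimately have tt3: "t \<le> t3" unfolding t_def by linarith
      obtain c where c: "f = (\<lambda>j x. c * wf m eps (2*t) j x)" "c \<noteq> 0 \<longrightarrow> cD m eps (2*t) = 0"
        using cl[OF t0 tt3] ef lt by auto
      have "t \<noteq> t1" "t \<noteq> t2" "t \<noteq> t3" using that lt by (auto simp: l1_def l2_def l3_def)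
      then have "cD m eps (2*t) \<noteq> 0" using cD_iff[OF t0 tt3] by blast
      then have "c = 0" using c(2) by blast
      then show ?thesis using c(1) by simp
    qed
  qed
  have o: "l1 < l2" "l2 < l3" unfolding l1_def l2_def l3_def using r tpos
    by (auto intro!: power_strict_mono)
  have ev: "eigenvalue m eps 1 = l1 \<and> eigenvalue m eps 2 = l2 \<and> eigenvalue m eps 3 = l3"
    by (rule eigenvalues3[OF o M1 M2 M3 M0]) auto
  show ?thesis
  proof (intro exI[of _ eps] conjI eps0)
    show "\<exists>f1 f2 f3. first_three_eigenfunctions m eps f1 f2 f3"
    proof (intro exI)
      show "first_three_eigenfunctions m eps (wf m eps (2*t1)) (wf m eps (2*t2)) (wf m eps (2*t3))"
        unfolding first_three_eigenfunctions_def using ev E1 E2 E3 N1 N2 N3 o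
        by (auto intro!: orth[OF _ _ _ eps0])
    qed
    show "\<forall>f1 f2 f3. first_three_eigenfunctions m eps f1 f2 f3 \<longrightarrow>
              (\<exists>b :: real. num_zeros m eps (\<lambda>j x. f2 j x + b * f3 j x) = 1)"
    proof (intro allI impI)
      fix f1 f2 f3 assume F: "first_three_eigenfunctions m eps f1 f2 f3"
      then have f2: "eigen_fun m eps ((2*t2)^2) f2" "f2 \<noteq> (\<lambda>j x. 0)"
        and f3: "eigen_fun m eps ((2*t3)^2) f3" "f3 \<noteq> (\<lambda>j x. 0)"
        using ev unfolding first_three_eigenfunctions_def l2_def l3_def by auto
      obtain c2 where c2: "f2 = (\<lambda>j x. c2 * wf m eps (2*t2) j x)"
        using cl[OF tpos(1) _ f2(1)] r by auto
      obtain c3 where c3: "f3 = (\<lambda>j x. c3 * wf m eps (2*t3) j x)"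
        using cl[OF tpos(2) _ f3(1)] by auto
      have c2nz: "c2 \<noteq> 0" using c2 f2(2) by auto
      have c3nz: "c3 \<noteq> 0" using c3 f3(2) by auto
      have eq: "(\<lambda>j x. f2 j x + (bb * c2 / c3) * f3 j x) =
          (\<lambda>j x. c2 * (wf m eps (2*t2) j x + bb * wf m eps (2*t3) j x))"
        using c3nz unfolding c2 c3 by (simp add: algebra_simps)
      have "num_zeros m eps (\<lambda>j x. f2 j x + (bb * c2 / c3) * f3 j x) = 1"
        unfolding num_zeros_def eq zp_scale[OF c2nz] zp by simp
      then show "\<exists>b :: real. num_zeros m eps (\<lambda>j x. f2 j x + b * f3 j x) = 1" by blast
    qed
  qed
qed

end
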